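(* Let $N$ be a prime number, let $\omega=\exp(i\pi k/N)$ with $0<k<2N$ and $\gcd(k,2N)=1$ be a primitive $2N$-th root of unity, and let $L\subset\mathbb{R}^3$ be an oriented link. Then $V_N(L)=U_N^{\nu}\cdot \tilde V_N(L)$, where $\nu$ is the multiplicity of the root of $V_N(L)$ at $q=\omega$, $\tilde V_N(L)\in\mathbb{Z}[q,q^{-1}]$, and $U_N$ does not divide $\tilde V_N(L)$ in $\mathbb{Z}[q,q^{-1}]$.
   Context: For $N\in\mathbb{N}$, $V_N\colon\{\text{oriented links in }\mathbb{R}^3\}/\text{isotopy}\to\mathbb{Z}[q,q^{-1}]$ denotes the unique link invariant with $V_N(\text{unknot})=1$ satisfying the skein relation $q^{-N}V_N(L_+)-q^{N}V_N(L_-)=(q^{-1}-q)V_N(L_0)$, where $L_+,L_-,L_0$ differ only near one point as a positive crossing, a negative crossing and the oriented smoothing. Further $U_N=\frac{q^{-N}-q^{N}}{q^{-1}-q}=q^{-N+1}+q^{-N+3}+\dots+q^{N-1}$ for $N\ge 2$. *)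

theory Defs
  imports Complex_Main "HOL-Library.Poly_Mapping" "HOL-Computational_Algebra.Polynomial"
begin

text \<open>A Laurent polynomial in q with integer coefficients is a finitely supported
  map from exponents (int) to coefficients (int); the convolution product of
  Poly_Mapping makes this the commutative ring Z[q,q^-1].\<close>

type_synonym lpoly = "int \<Rightarrow>\<^sub>0 int"

definition qpow :: "int \<Rightarrow> lpoly" where
  "qpow e = Poly_Mapping.single e 1"

definition U :: "nat \<Rightarrow> lpoly" where
  "U N = (\<Sum>j<N. qpow (2 * int j - int N + 1))"

text \<open>The ordinary complex polynomial q^(-m) f(q), m the lowest exponent of f;
  it has the same nonzero roots with the same multiplicities as f.\<close>
definition lp_to_poly :: "lpoly \<Rightarrow> complex poly" where
  "lp_to_poly f =
     (let m = (if Poly_Mapping.keys f = {} then 0 else Min (Poly_Mapping.keys f));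
          M = (if Poly_Mapping.keys f = {} then 0 else Max (Poly_Mapping.keys f))
      in Poly (map (\<lambda>j. of_int (Poly_Mapping.lookup f (m + int j))) [0..<nat (M - m) + 1]))"

definition root_mult :: "lpoly \<Rightarrow> complex \<Rightarrow> nat" where
  "root_mult f w = order w (lp_to_poly f)"

text \<open>A braid word on n strands: list of generators (i, s), 1 \<le> i < n,
  s = True for sigma_i (positive crossing), s = False for sigma_i^-1.
  By Alexander's theorem every oriented link is the closure of such a braid,
  and by Markov's theorem two closures are isotopic iff the braids are related
  by braid relations, conjugation and (de)stabilization.\<close>

type_synonym braid = "(nat \<times> bool) list"

definition braid_word :: "nat \<Rightarrow> braid \<Rightarrow> bool" where
  "braid_word n w \<longleftrightarrow> (\<forall>(i, s) \<in> set w. 1 \<le> i \<and> i < n)"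

definition is_V :: "nat \<Rightarrow> (nat \<Rightarrow> braid \<Rightarrow> lpoly) \<Rightarrow> bool" where
  "is_V N V \<longleftrightarrow>
     \<comment> \<open>free cancellation sigma_i sigma_i^-1 = 1\<close>
     (\<forall>n u v i s. braid_word n (u @ v) \<and> 1 \<le> i \<and> i < n \<longrightarrow>
        V n (u @ [(i, s), (i, \<not> s)] @ v) = V n (u @ v)) \<and>
     \<comment> \<open>far commutativity\<close>
     (\<forall>n u v i j s t. braid_word n (u @ v) \<and> 1 \<le> i \<and> i < n \<and> 1 \<le> j \<and> j < n
        \<and> i + 2 \<le> j \<longrightarrow>
        V n (u @ [(i, s), (j, t)] @ v) = V n (u @ [(j, t), (i, s)] @ v)) \<and>
     \<comment> \<open>braid relation sigma_i sigma_(i+1) sigma_i = sigma_(i+1) sigma_i sigma_(i+1)\<close>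
     (\<forall>n u v i. braid_word n (u @ v) \<and> 1 \<le> i \<and> i + 1 < n \<longrightarrow>
        V n (u @ [(i, True), (i + 1, True), (i, True)] @ v) =
        V n (u @ [(i + 1, True), (i, True), (i + 1, True)] @ v)) \<and>
     \<comment> \<open>conjugation (cyclic rotation of the word)\<close>
     (\<forall>n u v. braid_word n (u @ v) \<longrightarrow> V n (u @ v) = V n (v @ u)) \<and>
     \<comment> \<open>Markov stabilisation, both signs\<close>
     (\<forall>n w s. 1 \<le> n \<and> braid_word n w \<longrightarrow> V (n + 1) (w @ [(n, s)]) = V n w) \<and>
     \<comment> \<open>normalisation: the unknot is the closure of the trivial 1-strand braid\<close>
     V 1 [] = 1 \<and>
     \<comment> \<open>skein relation at a crossing\<close>
     (\<forall>n u v i. braid_word n (u @ v) \<and> 1 \<le> i \<and> i < n \<longrightarrow>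
        qpow (- int N) * V n (u @ [(i, True)] @ v)
        - qpow (int N) * V n (u @ [(i, False)] @ v)
        = (qpow (-1) - qpow 1) * V n (u @ v))"

end

theory Submission
  imports Defs "HOL-Computational_Algebra.Primes" "HOL-Computational_Algebra.Polynomial_Factorial" "HOL-Computational_Algebra.Field_as_Ring"
begin

abbreviation lk :: "lpoly \<Rightarrow> int \<Rightarrow> int" where "lk \<equiv> Poly_Mapping.lookup"

lemma qpow_mult: "qpow a * qpow b = qpow (a + b)"
  by (simp add: qpow_def mult_single)

lemma qpow_0[simp]: "qpow 0 = 1"
  by (simp add: qpow_def)

lemma lookup_single_mult: "lk (Poly_Mapping.single a c * f) e = c * lk f (e - a)"
proof -
  have eq: "(\<lambda>aa. c * lk f aa when e = a + aa) = (\<lambda>aa. c * lk f aa when aa = e - a)"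
    by (auto simp: fun_eq_iff when_def)
  have "lk (Poly_Mapping.single a c * f) e = Sum_any (\<lambda>aa. c * lk f aa when e = a + aa)"
    by (simp add: lookup_mult lookup_single when_mult mult_when Sum_any_right_distrib)
  also have "\<dots> = Sum_any (\<lambda>aa. c * lk f aa when aa = e - a)" by (subst eq) simp
  finally show ?thesis by simp
qed

lemma lookup_qpow_mult: "lk (qpow a * f) e = lk f (e - a)"
  by (simp add: qpow_def lookup_single_mult)

lemma qpow_ne0: "qpow a \<noteq> 0"
  by (simp add: qpow_def)

lemma qpow_power: "qpow a ^ n = qpow (int n * a)"
  by (induction n) (auto simp: qpow_mult algebra_simps)

definition phi :: "int poly \<Rightarrow> lpoly" where
  "phi P = poly (map_poly of_int P) (qpow 1)"

lemma phi_pCons: "phi (pCons a P) = of_int a + qpow 1 * phi P"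
  by (simp add: phi_def map_poly_pCons)

lemma lookup_phi: "lk (phi P) e = (if 0 \<le> e then coeff P (nat e) else 0)"
proof (induction P arbitrary: e)
  case 0
  then show ?case by (simp add: phi_def)
next
  case (pCons a P)
  show ?case
  proof (cases "e = 0")
    case True
    then show ?thesis using pCons by (simp add: phi_pCons lookup_qpow_mult lookup_of_int lookup_add)
  next
    case False
    then show ?thesis using pCons
      by (auto simp add: phi_pCons lookup_qpow_mult lookup_of_int lookup_add coeff_pCons
          split: nat.split) (simp_all add: nat_diff_distrib)
  qed
qed

lemma phi_inj: "phi P = phi Q \<Longrightarrow> P = Q"
proof -
  assume h: "phi P = phi Q"
  show "P = Q"
  proof (rule poly_eqI)
    fix n
    have "lk (phi P) (int n) = lk (phi Q) (int n)" using h by simp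
    then show "coeff P n = coeff Q n" by (simp add: lookup_phi)
  qed
qed

lemma phi_add: "phi (P + Q) = phi P + phi Q"
  by (rule poly_mapping_eqI) (simp add: lookup_phi lookup_add)

lemma phi_diff: "phi (P - Q) = phi P - phi Q"
  by (rule poly_mapping_eqI) (simp add: lookup_phi lookup_minus)

lemma phi_0[simp]: "phi 0 = 0"
  by (simp add: phi_def)

lemma phi_1[simp]: "phi 1 = 1"
  by (simp add: phi_def)

lemma phi_eq_0_iff: "phi P = 0 \<longleftrightarrow> P = 0"
  using phi_inj by fastforce

lemma map_poly_of_int_mult:
  "map_poly (of_int :: int \<Rightarrow> 'a::comm_ring_1) (P * Q) = map_poly of_int P * map_poly of_int Q"
  by (rule poly_eqI) (simp add: coeff_map_poly coeff_mult of_int_sum)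

lemma map_poly_of_int_add:
  "map_poly (of_int :: int \<Rightarrow> 'a::comm_ring_1) (P + Q) = map_poly of_int P + map_poly of_int Q"
  by (rule poly_eqI) (simp add: coeff_map_poly)

lemma map_poly_of_int_diff:
  "map_poly (of_int :: int \<Rightarrow> 'a::comm_ring_1) (P - Q) = map_poly of_int P - map_poly of_int Q"
  by (rule poly_eqI) (simp add: coeff_map_poly)

lemma map_poly_of_int_power:
  "map_poly (of_int :: int \<Rightarrow> 'a::comm_ring_1) (P ^ n) = map_poly of_int P ^ n"
  by (induction n) (simp_all add: map_poly_of_int_mult)

lemma phi_mult: "phi (P * Q) = phi P * phi Q"
  by (simp add: phi_def map_poly_of_int_mult)

lemma phi_power: "phi (P ^ n) = phi P ^ n"
  by (induction n) (simp_all add: phi_mult)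

lemma phi_monom: "phi (monom 1 k) = qpow (int k)"
  by (rule poly_mapping_eqI) (auto simp: lookup_phi coeff_monom qpow_def lookup_single when_def)

lemma phi_smult: "phi (smult c P) = of_int c * phi P"
  by (rule poly_mapping_eqI) (simp add: lookup_phi lookup_mult lookup_of_int when_mult mult_when)

lemma lp_repr: "\<exists>m P. f = qpow m * phi P"
proof -
  obtain B :: nat where B: "\<forall>e\<in>Poly_Mapping.keys f. \<bar>e\<bar> < int B"
  proof -
    have "finite (abs ` Poly_Mapping.keys f)" by (rule finite_imageI) (rule finite_keys)
    then obtain B where "\<forall>x\<in>abs ` Poly_Mapping.keys f. x \<le> B" using finite_nat_set_iff_bounded_le
      by (metis finite_imageI finite_keys bdd_above_def bdd_above_finite)
    then show ?thesis using that[of "nat B + 1"] by fastforce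
  qed
  define P where "P = Poly (map (\<lambda>j. lk f (- int B + int j)) [0..<2*B])"
  have "f = qpow (- int B) * phi P"
  proof (rule poly_mapping_eqI)
    fix e
    show "lk f e = lk (qpow (- int B) * phi P) e"
    proof -
      have r: "lk (qpow (- int B) * phi P) e = (if 0 \<le> e + int B \<and> nat (e + int B) < 2*B then lk f e else 0)"
        by (auto simp add: lookup_qpow_mult lookup_phi P_def nth_default_def)
      show ?thesis
      proof (cases "lk f e = 0")
        case True then show ?thesis using r by simp
      next
        case False
        then have "\<bar>e\<bar> < int B" using B by (meson in_keys_iff)
        then show ?thesis using r by auto
      qed
    qed
  qed
  then show ?thesis by blast
qed

inductive mv :: "nat list \<Rightarrow> nat list \<Rightarrow> bool" where
  comm: "i + 2 \<le> j \<Longrightarrow> mv (u @ [i, j] @ v) (u @ [j, i] @ v)"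
| comm': "i + 2 \<le> j \<Longrightarrow> mv (u @ [j, i] @ v) (u @ [i, j] @ v)"
| br: "mv (u @ [i, i + 1, i] @ v) (u @ [i + 1, i, i + 1] @ v)"
| br': "mv (u @ [i + 1, i, i + 1] @ v) (u @ [i, i + 1, i] @ v)"

abbreviation mvs where "mvs \<equiv> mv\<^sup>*\<^sup>*"

lemma mv_ctxt: "mv x y \<Longrightarrow> mv (a @ x @ b) (a @ y @ b)"
proof (induction rule: mv.induct)
  case (comm i j u v) then show ?case using mv.comm[of i j "a @ u" "v @ b"] by simp
next
  case (comm' i j u v) then show ?case using mv.comm'[of i j "a @ u" "v @ b"] by simp
next
  case (br u i v) then show ?case using mv.br[of "a @ u" i "v @ b"] by simp
next
  case (br' u i v) then show ?case using mv.br'[of "a @ u" i "v @ b"] by simp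
qed

lemma mvs_ctxt: "mvs x y \<Longrightarrow> mvs (a @ x @ b) (a @ y @ b)"
  by (induction rule: rtranclp_induct) (auto intro: rtranclp.rtrancl_into_rtrancl mv_ctxt)

lemma mv_set: "mv x y \<Longrightarrow> set y = set x"
  by (induction rule: mv.induct) auto

lemma mvs_set: "mvs x y \<Longrightarrow> set y = set x"
  by (induction rule: rtranclp_induct) (auto dest: mv_set)

lemma mv_length: "mv x y \<Longrightarrow> length y = length x"
  by (induction rule: mv.induct) auto

lemma mvs_length: "mvs x y \<Longrightarrow> length y = length x"
  by (induction rule: rtranclp_induct) (auto dest: mv_length)

definition occ :: "nat \<Rightarrow> nat list \<Rightarrow> nat" where
  "occ c xs = length (filter ((=) c) xs)"

lemma occ_simps[simp]: "occ c [] = 0" "occ c (x # xs) = (if x = c then Suc (occ c xs) else occ c xs)"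
  "occ c (xs @ ys) = occ c xs + occ c ys"
  by (auto simp: occ_def)

lemma occ_0_iff: "occ c xs = 0 \<longleftrightarrow> c \<notin> set xs"
  by (induction xs) auto

lemma occ_pos: "occ c xs \<noteq> 0 \<Longrightarrow> c \<in> set xs"
  by (metis occ_0_iff)

definition has_pair :: "nat list \<Rightarrow> bool" where
  "has_pair y \<longleftrightarrow> (\<exists>u v i. y = u @ [i, i] @ v)"

lemma occ2_split:
  assumes "2 \<le> occ c x"
  shows "\<exists>a y b. x = a @ [c] @ y @ [c] @ b \<and> c \<notin> set y \<and> c \<notin> set a"
proof -
  have "c \<in> set x" using assms occ_0_iff[of c x] by (cases "c \<in> set x") auto
  then obtain a r where x: "x = a @ c # r" and na: "c \<notin> set a" by (meson split_list_first)
  have "occ c r \<ge> 1" using assms x na occ_0_iff[of c a] by auto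
  then have "c \<in> set r" using occ_pos by fastforce
  then obtain y b where r: "r = y @ c # b" and ny: "c \<notin> set y" by (meson split_list_first)
  show ?thesis using x r na ny by auto
qed

lemma commute_right:
  assumes "\<forall>i\<in>set y. i + 2 \<le> c"
  shows "mvs ([c] @ y) (y @ [c])"
  using assms
proof (induction y)
  case Nil then show ?case by simp
next
  case (Cons i y)
  have "mv ([] @ [c, i] @ y) ([] @ [i, c] @ y)" using Cons.prems by (intro mv.comm') simp
  moreover have "mvs ([i] @ [c] @ y) ([i] @ (y @ [c]) @ [])" using Cons by (intro mvs_ctxt[where b="[]", simplified]) auto
  ultimately show ?case by (simp add: converse_rtranclp_into_rtranclp)
qed

lemma commute_left:
  assumes "\<forall>i\<in>set y. i + 2 \<le> c"
  shows "mvs (y @ [c]) ([c] @ y)"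
  using assms
proof (induction y rule: rev_induct)
  case Nil then show ?case by simp
next
  case (snoc i y)
  have "mv ((y @ [i, c] @ [])) (y @ [c, i] @ [])" using snoc.prems by (intro mv.comm) simp
  moreover have "mvs ([] @ (y @ [c]) @ [i]) ([] @ ([c] @ y) @ [i])" using snoc by (intro mvs_ctxt) auto
  ultimately show ?case
    by (metis (no_types, lifting) append_Cons append_Nil append_assoc rtranclp.rtrancl_into_rtrancl rtranclp.rtrancl_refl rtranclp_trans)
qed

lemma main_comb:
  "set x \<subseteq> {1..<m} \<Longrightarrow> \<exists>y. mvs x y \<and> (has_pair y \<or> occ (m - 1) y \<le> 1)"
proof (induction m arbitrary: x)
  case 0 then show ?case by auto
next
  case (Suc m)
  define c where "c = m"
  have "\<forall>x. set x \<subseteq> {1..<Suc m} \<longrightarrow> occ c x = k \<longrightarrow> (\<exists>y. mvs x y \<and> (has_pair y \<or> occ c y \<le> 1))" for k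
  proof (induction k rule: less_induct)
    case (less k)
    show ?case
    proof (intro allI impI)
      fix x assume xs: "set x \<subseteq> {1..<Suc m}" and ok: "occ c x = k"
      show "\<exists>y. mvs x y \<and> (has_pair y \<or> occ c y \<le> 1)"
      proof (cases "k \<le> 1")
        case True then show ?thesis using ok by blast
      next
        case False
        then obtain a y b where x: "x = a @ [c] @ y @ [c] @ b" and ny: "c \<notin> set y" and na: "c \<notin> set a"
          using occ2_split[of c x] ok by auto
        have ys: "set y \<subseteq> {1..<m}" using xs ny unfolding x c_def by (force simp: subset_iff less_Suc_eq)
        obtain y' where yy: "mvs y y'" and y'p: "has_pair y' \<or> occ (m - 1) y' \<le> 1"
          using Suc.IH[OF ys] by blast
        have sy': "set y' \<subseteq> {1..<m}" using mvs_set[OF yy] ys by simp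
        have step1: "mvs x (a @ [c] @ y' @ [c] @ b)"
          using mvs_ctxt[OF yy, of "a @ [c]" "[c] @ b"] x by simp
        show ?thesis
        proof (cases "has_pair y'")
          case True
          then obtain u v i where "y' = u @ [i, i] @ v" unfolding has_pair_def by blast
          then have "has_pair (a @ [c] @ y' @ [c] @ b)" unfolding has_pair_def
            by (rule_tac x="a @ [c] @ u" in exI, rule_tac x="v @ [c] @ b" in exI) auto
          then show ?thesis using step1 by blast
        next
          case False
          then have o1: "occ (m - 1) y' \<le> 1" using y'p by blast
          show ?thesis
          proof (cases "occ (m - 1) y' = 0")
            case True
            then have nn: "m - 1 \<notin> set y'" using occ_0_iff by blast
            have "\<forall>i\<in>set y'. i + 2 \<le> c"
            proof
              fix i assume "i \<in> set y'"
              then have "i < m" "i \<noteq> m - 1" using sy' nn by auto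
              then show "i + 2 \<le> c" using c_def by linarith
            qed
            then have "mvs ([c] @ y') (y' @ [c])" by (rule commute_right)
            from mvs_ctxt[OF this, of a "[c] @ b"]
            have "mvs (a @ [c] @ y' @ [c] @ b) (a @ y' @ [c, c] @ b)" by simp
            moreover have "has_pair (a @ y' @ [c, c] @ b)" unfolding has_pair_def
              by (rule_tac x="a @ y'" in exI, rule_tac x="b" in exI) auto
            ultimately show ?thesis using step1 by (meson rtranclp_trans)
          next
            case False
            then have o1': "occ (m - 1) y' = 1" using o1 by simp
            then have "m - 1 \<in> set y'" using occ_pos by fastforce
            then obtain y1 y2 where y': "y' = y1 @ (m - 1) # y2" and n1: "m - 1 \<notin> set y1"
              by (meson split_list_first)
            have n2: "m - 1 \<notin> set y2" using o1' y' n1 occ_0_iff by auto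
            have m2: "m \<ge> 2" using \<open>m - 1 \<in> set y'\<close> sy' by fastforce
            have c1: "\<forall>i\<in>set y1. i + 2 \<le> c"
            proof
              fix i assume "i \<in> set y1"
              then have "i \<in> set y'" "i \<noteq> m - 1" using y' n1 by auto
              then have "i < m" "i \<noteq> m - 1" using sy' by auto
              then show "i + 2 \<le> c" using c_def by linarith
            qed
            have c2: "\<forall>i\<in>set y2. i + 2 \<le> c"
            proof
              fix i assume "i \<in> set y2"
              then have "i \<in> set y'" "i \<noteq> m - 1" using y' n2 by auto
              then have "i < m" "i \<noteq> m - 1" using sy' by auto
              then show "i + 2 \<le> c" using c_def by linarith
            qed
            have "mvs ([c] @ y1) (y1 @ [c])" by (rule commute_right[OF c1])
            from mvs_ctxt[OF this, of a "[m - 1] @ y2 @ [c] @ b"]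
            have s2: "mvs (a @ [c] @ y' @ [c] @ b) (a @ y1 @ [c, m - 1] @ y2 @ [c] @ b)" using y' by simp
            have "mvs (y2 @ [c]) ([c] @ y2)" by (rule commute_left[OF c2])
            from mvs_ctxt[OF this, of "a @ y1 @ [c, m - 1]" b]
            have s3: "mvs (a @ y1 @ [c, m - 1] @ y2 @ [c] @ b) (a @ y1 @ [c, m - 1, c] @ y2 @ b)" by simp
            have "mv ((a @ y1) @ [(m - 1) + 1, m - 1, (m - 1) + 1] @ (y2 @ b)) ((a @ y1) @ [m - 1, (m - 1) + 1, m - 1] @ (y2 @ b))"
              by (rule mv.br')
            then have s4: "mv (a @ y1 @ [c, m - 1, c] @ y2 @ b) (a @ y1 @ [m - 1, c, m - 1] @ y2 @ b)"
              using m2 c_def by simp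
            define x' where "x' = a @ y1 @ [m - 1, c, m - 1] @ y2 @ b"
            have sx: "mvs x x'" unfolding x'_def using step1 s2 s3 s4
              by (meson rtranclp.rtrancl_into_rtrancl rtranclp_trans)
            have "c \<notin> set y'" using mvs_set[OF yy] ny by simp
            then have "c \<notin> set y1" "c \<notin> set y2" using y' by auto
            then have "occ c y1 = 0" "occ c y2 = 0" "occ c a = 0" using na occ_0_iff by blast+
            moreover have "c \<noteq> m - 1" using m2 c_def by simp
            ultimately have "occ c x' < k" using ok unfolding x'_def x by simp
            moreover have "set x' \<subseteq> {1..<Suc m}" using mvs_set[OF sx] xs by simp
            ultimately obtain z where "mvs x' z" "has_pair z \<or> occ c z \<le> 1" using less by blast
            then show ?thesis using sx by (meson rtranclp_trans)
          qed
        qed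
      qed
    qed
  qed
  then show ?case using Suc.prems c_def by auto
qed

definition pos :: "nat list \<Rightarrow> braid" where "pos xs = map (\<lambda>i. (i, True)) xs"

lemma pos_simps[simp]: "pos [] = []" "pos (x # xs) = (x, True) # pos xs" "pos (xs @ ys) = pos xs @ pos ys"
  "length (pos xs) = length xs"
  by (auto simp: pos_def)

lemma braid_word_append[simp]: "braid_word n (u @ v) \<longleftrightarrow> braid_word n u \<and> braid_word n v"
  by (auto simp: braid_word_def)

lemma braid_word_Cons[simp]: "braid_word n (x # v) \<longleftrightarrow> 1 \<le> fst x \<and> fst x < n \<and> braid_word n v"
  by (cases x) (auto simp: braid_word_def)

lemma braid_word_Nil[simp]: "braid_word n []"
  by (auto simp: braid_word_def)

lemma braid_word_pos: "braid_word n (pos xs) \<longleftrightarrow> set xs \<subseteq> {1..<n}"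
  by (induction xs) auto

lemma braid_word_fst: "braid_word n w \<longleftrightarrow> set (map fst w) \<subseteq> {1..<n}"
  by (induction w) auto

locale bred =
  fixes P :: "nat \<Rightarrow> braid \<Rightarrow> bool"
  assumes cancel: "\<And>n u v i s. braid_word n (u @ v) \<Longrightarrow> 1 \<le> i \<Longrightarrow> i < n \<Longrightarrow> P n (u @ v) \<Longrightarrow>
        P n (u @ [(i, s), (i, \<not> s)] @ v)"
  and comm: "\<And>n u v i j s t. braid_word n (u @ v) \<Longrightarrow> 1 \<le> i \<Longrightarrow> i < n \<Longrightarrow> 1 \<le> j \<Longrightarrow> j < n
        \<Longrightarrow> i + 2 \<le> j \<Longrightarrow> P n (u @ [(i, s), (j, t)] @ v) = P n (u @ [(j, t), (i, s)] @ v)"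
  and braid: "\<And>n u v i. braid_word n (u @ v) \<Longrightarrow> 1 \<le> i \<Longrightarrow> i + 1 < n \<Longrightarrow>
        P n (u @ [(i, True), (i + 1, True), (i, True)] @ v) =
        P n (u @ [(i + 1, True), (i, True), (i + 1, True)] @ v)"
  and rot: "\<And>n u v. braid_word n (u @ v) \<Longrightarrow> P n (u @ v) = P n (v @ u)"
  and stab: "\<And>n w s. 1 \<le> n \<Longrightarrow> braid_word n w \<Longrightarrow> P n w \<Longrightarrow> P (n + 1) (w @ [(n, s)])"
  and one: "P 1 []"
  and skein: "\<And>n u v i s. braid_word n (u @ v) \<Longrightarrow> 1 \<le> i \<Longrightarrow> i < n \<Longrightarrow> P n (u @ v) \<Longrightarrow>
        P n (u @ [(i, s)] @ v) \<Longrightarrow> P n (u @ [(i, \<not> s)] @ v)"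
  and ext: "\<And>n w. 1 \<le> n \<Longrightarrow> braid_word n w \<Longrightarrow> P n w \<Longrightarrow> P (Suc n) w"
begin

lemma mv_P:
  assumes "mv x y" "set x \<subseteq> {1..<n}"
  shows "P n (pos x) = P n (pos y)"
  using assms
proof (induction rule: mv.induct)
  case (comm i j u v)
  then show ?case using bred.comm[OF bred_axioms, of n "pos u" "pos v" i j True True]
    by (simp add: braid_word_pos)
next
  case (comm' i j u v)
  then show ?case using bred.comm[OF bred_axioms, of n "pos u" "pos v" i j True True]
    by (simp add: braid_word_pos)
next
  case (br u i v)
  then show ?case using braid[of n "pos u" "pos v" i] by (simp add: braid_word_pos)
next
  case (br' u i v)
  then show ?case using braid[of n "pos u" "pos v" i] by (simp add: braid_word_pos)
qed

lemma mvs_P: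
  assumes "mvs x y" "set x \<subseteq> {1..<n}"
  shows "P n (pos x) = P n (pos y)"
  using assms
proof (induction rule: rtranclp_induct)
  case base then show ?case by simp
next
  case (step y z)
  then show ?case using mv_P[of y z n] mvs_set[of x y] by simp
qed

theorem all_P: "1 \<le> n \<Longrightarrow> braid_word n w \<Longrightarrow> P n w"
proof -
  have "\<forall>n w. length w = l \<longrightarrow> 1 \<le> n \<longrightarrow> braid_word n w \<longrightarrow> P n w" for l
  proof (induction l rule: less_induct)
    case (less l)
    have IHl: "\<And>n w. length w < l \<Longrightarrow> 1 \<le> n \<Longrightarrow> braid_word n w \<Longrightarrow> P n w" using less by blast
    show ?case
    proof (rule allI)
      fix n
      show "\<forall>w. length w = l \<longrightarrow> 1 \<le> n \<longrightarrow> braid_word n w \<longrightarrow> P n w"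
      proof (induction n)
        case 0 then show ?case by simp
      next
        case (Suc n')
        show ?case
        proof (intro allI impI)
          fix w assume lw: "length w = l" and n1: "1 \<le> Suc n'" and bw: "braid_word (Suc n') w"
          define n where "n = Suc n'"
          show "P (Suc n') w"
          proof (cases "n' = 0")
            case True
            then have "w = []" using bw by (cases w) auto
            then show ?thesis using True one by simp
          next
            case False
            have signs: "\<And>u. braid_word n (u @ r) \<Longrightarrow> length (u @ r) = l \<Longrightarrow> P n (u @ pos (map fst r)) \<Longrightarrow> P n (u @ r)" for r
            proof (induction r)
              case Nil then show ?case by simp
            next
              case (Cons x r)
              obtain i s where x: "x = (i, s)" by (cases x)
              have h1: "P n ((u @ [(i, True)]) @ r)"
                using Cons.IH[of "u @ [(i, True)]"] Cons.prems x by simp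
              show ?case
              proof (cases s)
                case True then show ?thesis using h1 x by simp
              next
                case False
                have h0: "P n (u @ r)" using IHl[of "u @ r" n] Cons.prems n_def by auto
                have "P n (u @ [(i, \<not> True)] @ r)"
                  using skein[of n u r i True] h0 h1 Cons.prems x by simp
                then show ?thesis using False x by simp
              qed
            qed
            have sw: "set (map fst w) \<subseteq> {1..<n}" using bw braid_word_fst n_def by blast
            obtain y where yy: "mvs (map fst w) y" and yp: "has_pair y \<or> occ (n - 1) y \<le> 1"
              using main_comb[OF sw] by blast
            have sy: "set y \<subseteq> {1..<n}" using mvs_set[OF yy] sw by simp
            have ly: "length y = l" using mvs_length[OF yy] lw by simp
            have Py: "P n (pos y)"
            proof (cases "has_pair y")
              case True
              then obtain u v i where y: "y = u @ [i, i] @ v" unfolding has_pair_def by blast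
              have bi: "1 \<le> i" "i < n" using sy y by auto
              have "P n (pos u @ pos v)" using IHl[of "pos u @ pos v" n] ly y sy n_def
                by (simp add: braid_word_pos)
              then have a: "P n (pos u @ [(i, True), (i, \<not> True)] @ pos v)"
                using cancel[of n "pos u" "pos v" i True] bi sy y by (simp add: braid_word_pos)
              have b: "P n ((pos u @ [(i, True)]) @ pos v)" using IHl[of "(pos u @ [(i, True)]) @ pos v" n] ly y sy n_def
                by (simp add: braid_word_pos)
              have "P n ((pos u @ [(i, True)]) @ [(i, \<not> False)] @ pos v)"
                using skein[of n "pos u @ [(i, True)]" "pos v" i False] a b bi sy y by (simp add: braid_word_pos)
              then show ?thesis using y by simp
            next
              case False
              then have o: "occ (n - 1) y \<le> 1" using yp by blast
              show ?thesis
              proof (cases "occ (n - 1) y = 0")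
                case True
                then have "n - 1 \<notin> set y" using occ_0_iff by blast
                then have "set y \<subseteq> {1..<n'}" using sy n_def by (force simp: subset_iff less_Suc_eq)
                then have "P n' (pos y)" using Suc.IH ly \<open>n' \<noteq> 0\<close> by (simp add: braid_word_pos)
                then show ?thesis using ext[of n' "pos y"] n_def \<open>n' \<noteq> 0\<close> \<open>set y \<subseteq> {1..<n'}\<close> by (simp add: braid_word_pos)
              next
                case False
                then have "n - 1 \<in> set y" using occ_pos by blast
                then obtain y1 y2 where y: "y = y1 @ (n - 1) # y2" by (meson split_list_first)
                have n12: "n - 1 \<notin> set y1" "n - 1 \<notin> set y2" using o y occ_0_iff[of "n-1" y1] occ_0_iff[of "n-1" y2] by auto
                have s12: "set (y2 @ y1) \<subseteq> {1..<n'}" using sy y n12 n_def by (force simp: subset_iff less_Suc_eq)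
                have "P n' (pos (y2 @ y1))" using IHl[of "pos (y2 @ y1)" n'] ly y s12 \<open>n' \<noteq> 0\<close>
                  by (simp add: braid_word_pos)
                then have "P (n' + 1) (pos (y2 @ y1) @ [(n', True)])"
                  using stab[of n' "pos (y2 @ y1)" True] s12 \<open>n' \<noteq> 0\<close> by (simp add: braid_word_pos)
                then have p1: "P n ((pos y2 @ pos y1) @ [(n - 1, True)])" using n_def by simp
                have p2: "P n ((pos y2 @ pos y1) @ [(n - 1, True)]) = P n ([(n - 1, True)] @ (pos y2 @ pos y1))"
                  using rot[of n "pos y2 @ pos y1" "[(n - 1, True)]"] sy y by (simp add: braid_word_pos)
                have p3: "P n (([(n - 1, True)] @ pos y2) @ pos y1) = P n (pos y1 @ ([(n - 1, True)] @ pos y2))"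
                  using rot[of n "[(n - 1, True)] @ pos y2" "pos y1"] sy y by (simp add: braid_word_pos)
                show ?thesis using p1 p2 p3 y by simp
              qed
            qed
            have "P n (pos (map fst w))" using mvs_P[OF yy sw] Py by simp
            then have "P n ([] @ w)" using signs[of "[]" w] bw lw n_def by simp
            then show ?thesis using n_def by simp
          qed
        qed
      qed
    qed
  qed
  then show "1 \<le> n \<Longrightarrow> braid_word n w \<Longrightarrow> P n w" by blast
qed

end

abbreviation zz :: lpoly where "zz \<equiv> qpow (-1) - qpow 1"

lemma zz_ne0: "zz \<noteq> 0"
proof
  assume "zz = 0"
  then have "lk zz (-1) = 0" by simp
  then show False by (simp add: qpow_def lookup_minus lookup_single)
qed

lemma zz_U: "zz * U N = qpow (- int N) - qpow (int N)"
proof -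
  have "zz * U N = (\<Sum>j<N. qpow (2 * int j - int N) - qpow (2 * int (Suc j) - int N))"
    unfolding U_def sum_distrib_left
    by (rule sum.cong) (auto simp: algebra_simps qpow_mult)
  also have "\<dots> = qpow (- int N) - qpow (int N)"
    by (subst sum_lessThan_telescope'[where f = "\<lambda>j. qpow (2 * int j - int N)"]) simp
  finally show ?thesis .
qed

context
  fixes N :: nat and V :: "nat \<Rightarrow> braid \<Rightarrow> lpoly"
  assumes isV: "is_V N V"
begin

lemma V_cancel: "braid_word n (u @ v) \<Longrightarrow> 1 \<le> i \<Longrightarrow> i < n \<Longrightarrow> V n (u @ [(i, s), (i, \<not> s)] @ v) = V n (u @ v)"
  using isV[unfolded is_V_def, THEN conjunct1] by blast
lemma V_comm: "braid_word n (u @ v) \<Longrightarrow> 1 \<le> i \<Longrightarrow> i < n \<Longrightarrow> 1 \<le> j \<Longrightarrow> j < n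
        \<Longrightarrow> i + 2 \<le> j \<Longrightarrow> V n (u @ [(i, s), (j, t)] @ v) = V n (u @ [(j, t), (i, s)] @ v)"
  using isV[unfolded is_V_def, THEN conjunct2, THEN conjunct1] by blast
lemma V_braid: "braid_word n (u @ v) \<Longrightarrow> 1 \<le> i \<Longrightarrow> i + 1 < n \<Longrightarrow>
        V n (u @ [(i, True), (i + 1, True), (i, True)] @ v) =
        V n (u @ [(i + 1, True), (i, True), (i + 1, True)] @ v)"
  using isV[unfolded is_V_def, THEN conjunct2, THEN conjunct2, THEN conjunct1] by blast
lemma V_rot: "braid_word n (u @ v) \<Longrightarrow> V n (u @ v) = V n (v @ u)"
  using isV[unfolded is_V_def, THEN conjunct2, THEN conjunct2, THEN conjunct2, THEN conjunct1] by blast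
lemma V_stab: "1 \<le> n \<Longrightarrow> braid_word n w \<Longrightarrow> V (n + 1) (w @ [(n, s)]) = V n w"
  using isV[unfolded is_V_def, THEN conjunct2, THEN conjunct2, THEN conjunct2, THEN conjunct2, THEN conjunct1] by blast
lemma V_one: "V 1 [] = 1"
  using isV[unfolded is_V_def, THEN conjunct2, THEN conjunct2, THEN conjunct2, THEN conjunct2, THEN conjunct2, THEN conjunct1] by simp
lemma V_skein: "braid_word n (u @ v) \<Longrightarrow> 1 \<le> i \<Longrightarrow> i < n \<Longrightarrow>
        qpow (- int N) * V n (u @ [(i, True)] @ v) - qpow (int N) * V n (u @ [(i, False)] @ v)
        = zz * V n (u @ v)"
  using isV[unfolded is_V_def, THEN conjunct2, THEN conjunct2, THEN conjunct2, THEN conjunct2, THEN conjunct2, THEN conjunct2] by blast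

lemma V_ext: assumes "1 \<le> n" "braid_word n w" shows "V (Suc n) w = U N * V n w"
proof -
  have bw: "braid_word (n + 1) (w @ [])" using assms by (auto simp: braid_word_def)
  have "qpow (- int N) * V (n + 1) (w @ [(n, True)] @ []) - qpow (int N) * V (n + 1) (w @ [(n, False)] @ [])
        = zz * V (n + 1) (w @ [])"
    by (rule V_skein[OF bw]) (use assms in auto)
  then have "(qpow (- int N) - qpow (int N)) * V n w = zz * V (Suc n) w"
    using V_stab[OF assms, of True] V_stab[OF assms, of False] by (simp add: algebra_simps)
  then have "zz * (U N * V n w) = zz * V (Suc n) w" by (simp add: zz_U mult.assoc[symmetric])
  then show ?thesis using zz_ne0 by simp
qed

lemma V_Q:
  fixes Q :: "lpoly \<Rightarrow> bool"
  assumes Q1: "Q 1"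
    and Qa: "\<And>a b c. qpow (- int N) * a - qpow (int N) * b = zz * c \<Longrightarrow> Q b \<Longrightarrow> Q c \<Longrightarrow> Q a"
    and Qb: "\<And>a b c. qpow (- int N) * a - qpow (int N) * b = zz * c \<Longrightarrow> Q a \<Longrightarrow> Q c \<Longrightarrow> Q b"
    and QU: "\<And>f. Q f \<Longrightarrow> Q (U N * f)"
    and n: "1 \<le> n" "braid_word n w"
  shows "Q (V n w)"
proof -
  interpret bred "\<lambda>n w. Q (V n w)"
  proof
    show "\<And>n u v i s. braid_word n (u @ v) \<Longrightarrow> 1 \<le> i \<Longrightarrow> i < n \<Longrightarrow> Q (V n (u @ v)) \<Longrightarrow>
        Q (V n (u @ [(i, s), (i, \<not> s)] @ v))" using V_cancel by simp
    show "\<And>n u v i j s t. braid_word n (u @ v) \<Longrightarrow> 1 \<le> i \<Longrightarrow> i < n \<Longrightarrow> 1 \<le> j \<Longrightarrow> j < n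
        \<Longrightarrow> i + 2 \<le> j \<Longrightarrow> Q (V n (u @ [(i, s), (j, t)] @ v)) = Q (V n (u @ [(j, t), (i, s)] @ v))"
      using V_comm by metis
    show "\<And>n u v i. braid_word n (u @ v) \<Longrightarrow> 1 \<le> i \<Longrightarrow> i + 1 < n \<Longrightarrow>
        Q (V n (u @ [(i, True), (i + 1, True), (i, True)] @ v)) =
        Q (V n (u @ [(i + 1, True), (i, True), (i + 1, True)] @ v))" using V_braid by simp
    show "\<And>n u v. braid_word n (u @ v) \<Longrightarrow> Q (V n (u @ v)) = Q (V n (v @ u))" using V_rot by simp
    show "\<And>n w s. 1 \<le> n \<Longrightarrow> braid_word n w \<Longrightarrow> Q (V n w) \<Longrightarrow> Q (V (n + 1) (w @ [(n, s)]))"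
      using V_stab by simp
    show "Q (V 1 [])" using V_one Q1 by simp
    show "\<And>n u v i s. braid_word n (u @ v) \<Longrightarrow> 1 \<le> i \<Longrightarrow> i < n \<Longrightarrow> Q (V n (u @ v)) \<Longrightarrow>
        Q (V n (u @ [(i, s)] @ v)) \<Longrightarrow> Q (V n (u @ [(i, \<not> s)] @ v))"
    proof -
      fix n u v i s
      assume h: "braid_word n (u @ v)" "1 \<le> i" "i < n" "Q (V n (u @ v))" "Q (V n (u @ [(i, s)] @ v))"
      note sk = V_skein[OF h(1-3)]
      show "Q (V n (u @ [(i, \<not> s)] @ v))"
      proof (cases s)
        case True then show ?thesis using Qb[OF sk] h by simp
      next
        case False then show ?thesis using Qa[OF sk] h by simp
      qed
    qed
    show "\<And>n w. 1 \<le> n \<Longrightarrow> braid_word n w \<Longrightarrow> Q (V n w) \<Longrightarrow> Q (V (Suc n) w)"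
      using V_ext QU by simp
  qed
  show ?thesis by (rule all_P[OF n])
qed

end

definition allpar :: "bool \<Rightarrow> lpoly \<Rightarrow> bool" where
  "allpar b f \<longleftrightarrow> (\<forall>e\<in>Poly_Mapping.keys f. even e = b)"

lemma allpar_add: "allpar b f \<Longrightarrow> allpar b g \<Longrightarrow> allpar b (f + g)"
  using keys_add[of f g] unfolding allpar_def by blast

lemma allpar_uminus: "allpar b f \<Longrightarrow> allpar b (- f)"
  unfolding allpar_def by simp

lemma allpar_diff: "allpar b f \<Longrightarrow> allpar b g \<Longrightarrow> allpar b (f - g)"
  using allpar_add[of b f "- g"] allpar_uminus[of b g] by simp

lemma allpar_mult: "allpar b f \<Longrightarrow> allpar c g \<Longrightarrow> allpar (b = c) (f * g)"
  unfolding allpar_def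
proof
  fix e assume hf: "\<forall>e\<in>Poly_Mapping.keys f. even e = b" and hg: "\<forall>e\<in>Poly_Mapping.keys g. even e = c"
    and e: "e \<in> Poly_Mapping.keys (f * g)"
  then obtain x y where "e = x + y" "x \<in> Poly_Mapping.keys f" "y \<in> Poly_Mapping.keys g"
    using keys_mult[of f g] by blast
  then show "even e = (b = c)" using hf hg by auto
qed

lemma allpar_qpow: "allpar (even e) (qpow e)"
  unfolding allpar_def qpow_def by simp

lemma allpar_0: "allpar b 0"
  unfolding allpar_def by simp

lemma allpar_sum: "(\<And>j. j \<in> A \<Longrightarrow> allpar b (f j)) \<Longrightarrow> allpar b (sum f A)"
  by (induction A rule: infinite_finite_induct) (auto simp: allpar_0 allpar_add)

lemma allpar_zz: "allpar False zz"
proof -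
  have "allpar False (qpow (-1))" "allpar False (qpow 1)" using allpar_qpow[of "-1"] allpar_qpow[of 1] by simp_all
  then show ?thesis by (rule allpar_diff)
qed

lemma qpow_inv: "qpow (int N) * qpow (- int N) = 1" "qpow (- int N) * qpow (int N) = 1"
  by (simp_all add: qpow_mult)

lemma V_even:
  assumes isV: "is_V N V" and odd: "odd N" and n: "1 \<le> n" "braid_word n w"
  shows "allpar True (V n w)"
proof (rule V_Q[OF isV, where Q = "allpar True"])
  show "allpar True 1" unfolding allpar_def by simp
  have qN: "allpar False (qpow (int N))" "allpar False (qpow (- int N))"
    using allpar_qpow[of "int N"] allpar_qpow[of "- int N"] odd by simp_all
  show "allpar True a" if h: "qpow (- int N) * a - qpow (int N) * b = zz * c" "allpar True b" "allpar True c" for a b c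
  proof -
    have "qpow (- int N) * a = qpow (int N) * b + zz * c" using h(1) by (simp add: algebra_simps)
    moreover have "allpar False (qpow (int N) * b + zz * c)"
      using allpar_add[OF allpar_mult[OF qN(1) h(2)] allpar_mult[OF allpar_zz h(3)]] by simp
    ultimately have "allpar False (qpow (- int N) * a)" by simp
    then have "allpar True (qpow (int N) * (qpow (- int N) * a))" using allpar_mult[OF qN(1)] by fastforce
    then show ?thesis by (simp add: mult.assoc[symmetric] qpow_inv)
  qed
  show "allpar True b" if h: "qpow (- int N) * a - qpow (int N) * b = zz * c" "allpar True a" "allpar True c" for a b c
  proof -
    have "qpow (int N) * b = qpow (- int N) * a - zz * c" using h(1) by (simp add: algebra_simps)
    moreover have "allpar False (qpow (- int N) * a - zz * c)"
      using allpar_diff[OF allpar_mult[OF qN(2) h(2)] allpar_mult[OF allpar_zz h(3)]] by simp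
    ultimately have "allpar False (qpow (int N) * b)" by simp
    then have "allpar True (qpow (- int N) * (qpow (int N) * b))" using allpar_mult[OF qN(2)] by fastforce
    then show ?thesis by (simp add: mult.assoc[symmetric] qpow_inv)
  qed
  have "allpar True (U N)" unfolding U_def
  proof (rule allpar_sum)
    fix j
    have "even (2 * int j - int N + 1)" using odd by simp
    then show "allpar True (qpow (2 * int j - int N + 1))" using allpar_qpow[of "2 * int j - int N + 1"] by simp
  qed
  then show "allpar True (U N * f)" if "allpar True f" for f
    using allpar_mult[OF _ that] by fastforce
qed (rule n(1), rule n(2))

definition Qpos :: "lpoly \<Rightarrow> bool" where
  "Qpos f \<longleftrightarrow> (\<exists>m P. f = qpow m * phi P \<and> poly P 1 > 0)"

lemma qpow_nonneg: "0 \<le> k \<Longrightarrow> qpow k = phi (monom 1 (nat k))"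
  by (simp add: phi_monom)

lemma combine:
  "qpow m1 * phi P1 + qpow m2 * phi P2 =
   qpow (min m1 m2) * phi (monom 1 (nat (m1 - min m1 m2)) * P1 + monom 1 (nat (m2 - min m1 m2)) * P2)"
proof -
  define m where "m = min m1 m2"
  have "qpow m1 = qpow m * qpow (m1 - m)" "qpow m2 = qpow m * qpow (m2 - m)" by (simp_all add: qpow_mult)
  moreover have "qpow (m1 - m) = phi (monom 1 (nat (m1 - m)))" "qpow (m2 - m) = phi (monom 1 (nat (m2 - m)))"
    using qpow_nonneg m_def by auto
  ultimately show ?thesis unfolding m_def[symmetric] by (simp add: phi_add phi_mult algebra_simps)
qed

lemma Qpos_comb: "poly P1 1 > 0 \<Longrightarrow> poly P2 1 = 0 \<Longrightarrow> Qpos (qpow m1 * phi P1 + qpow m2 * phi P2)"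
  unfolding combine Qpos_def by (rule exI, rule exI, rule conjI, rule refl) (simp add: poly_monom)

lemma Qpos_nonzero: "Qpos f \<Longrightarrow> f \<noteq> 0"
  unfolding Qpos_def using qpow_ne0 phi_eq_0_iff by fastforce

lemma zz_phi: "zz = qpow (-1) * phi (1 - monom 1 2)"
  by (simp add: phi_diff phi_monom qpow_mult algebra_simps)

lemma poly_monom_1: "poly (monom 1 k * P) (1::int) = poly P 1"
  by (simp add: poly_monom)

definition uu :: "nat \<Rightarrow> int poly" where "uu N = (\<Sum>j<N. monom 1 (2 * j))"

lemma phi_sum: "phi (sum f A) = sum (\<lambda>j. phi (f j)) A"
  by (induction A rule: infinite_finite_induct) (auto simp: phi_add)

lemma U_phi: "U N = qpow (1 - int N) * phi (uu N)"
  unfolding U_def uu_def phi_sum sum_distrib_left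
  by (rule sum.cong) (auto simp: phi_monom qpow_mult intro!: arg_cong[where f=qpow])

lemma uu_1: "poly (uu N) 1 = int N"
  unfolding uu_def by (simp add: poly_sum poly_monom)

lemma V_pos:
  assumes isV: "is_V N V" and N: "0 < N" and n: "1 \<le> n" "braid_word n w"
  shows "Qpos (V n w)"
proof (rule V_Q[OF isV, where Q = Qpos])
  show "Qpos 1" unfolding Qpos_def by (rule exI[of _ 0], rule exI[of _ 1]) simp
  show "Qpos a" if h: "qpow (- int N) * a - qpow (int N) * b = zz * c" "Qpos b" "Qpos c" for a b c
  proof -
    obtain mb B where b: "b = qpow mb * phi B" "poly B 1 > 0" using h(2) unfolding Qpos_def by blast
    obtain mc C where c: "c = qpow mc * phi C" using h(3) unfolding Qpos_def by blast
    have "a = qpow (int N) * (qpow (- int N) * a)" by (simp add: mult.assoc[symmetric] qpow_inv)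
    also have "\<dots> = qpow (int N) * (qpow (int N) * b + zz * c)"
    proof -
      have e: "qpow (- int N) * a = qpow (int N) * b + zz * c" using h(1) by (simp add: algebra_simps)
      show ?thesis by (simp only: e)
    qed
    also have "\<dots> = qpow (2 * int N + mb) * phi B + qpow (int N - 1 + mc) * phi ((1 - monom 1 2) * C)"
    proof -
      have s1: "qpow (2 * int N + mb) = qpow (int N) * qpow (int N) * qpow mb"
        "qpow (int N - 1 + mc) = qpow (int N) * qpow (-1) * qpow mc" by (simp_all add: qpow_mult)
      show ?thesis unfolding b c zz_phi s1 phi_mult by (simp add: ac_simps distrib_left)
    qed
    moreover have "poly ((1 - monom 1 2) * C) (1::int) = 0" by (simp add: poly_monom)
    ultimately show ?thesis using Qpos_comb[OF b(2)] by simp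
  qed
  show "Qpos b" if h: "qpow (- int N) * a - qpow (int N) * b = zz * c" "Qpos a" "Qpos c" for a b c
  proof -
    obtain ma A where a: "a = qpow ma * phi A" "poly A 1 > 0" using h(2) unfolding Qpos_def by blast
    obtain mc C where c: "c = qpow mc * phi C" using h(3) unfolding Qpos_def by blast
    have "b = qpow (- int N) * (qpow (int N) * b)" by (simp add: mult.assoc[symmetric] qpow_inv)
    also have "\<dots> = qpow (- int N) * (qpow (- int N) * a - zz * c)"
    proof -
      have e: "qpow (int N) * b = qpow (- int N) * a - zz * c" using h(1) by (simp add: algebra_simps)
      show ?thesis by (simp only: e)
    qed
    also have "\<dots> = qpow (ma - 2 * int N) * phi A + qpow (- int N - 1 + mc) * phi (- ((1 - monom 1 2) * C))"
    proof -
      have s1: "qpow (ma - 2 * int N) = qpow (- int N) * qpow (- int N) * qpow ma"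
        "qpow (- int N - 1 + mc) = qpow (- int N) * qpow (-1) * qpow mc" by (simp_all add: qpow_mult)
      have s2: "phi (- X) = - phi X" for X using phi_diff[of 0 X] by simp
      show ?thesis unfolding a c zz_phi s1 phi_mult s2 by (simp add: ac_simps right_diff_distrib)
    qed
    moreover have "poly (- ((1 - monom 1 2) * C)) (1::int) = 0" by (simp add: poly_monom)
    ultimately show ?thesis using Qpos_comb[OF a(2)] by simp
  qed
  show "Qpos (U N * f)" if hf: "Qpos f" for f
  proof -
    obtain m F where f: "f = qpow m * phi F" "poly F 1 > 0" using hf unfolding Qpos_def by blast
    have s1: "qpow (1 - int N + m) = qpow (1 - int N) * qpow m" by (simp add: qpow_mult)
    have "U N * f = qpow (1 - int N + m) * phi (uu N * F)"
      unfolding f U_phi s1 phi_mult by (simp add: ac_simps)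
    moreover have "poly (uu N * F) 1 > 0" using f(2) N uu_1[of N] by simp
    ultimately show ?thesis unfolding Qpos_def by blast
  qed
qed (rule n(1), rule n(2))

abbreviation cm :: "int poly \<Rightarrow> complex poly" where "cm \<equiv> map_poly of_int"

lemma coeff_cm[simp]: "coeff (cm P) j = of_int (coeff P j)"
  by (simp add: coeff_map_poly)

lemma cm_pderiv: "cm (pderiv P) = pderiv (cm P)"
  by (rule poly_eqI) (simp add: coeff_pderiv)

lemma cm_eq_0_iff[simp]: "cm P = 0 \<longleftrightarrow> P = 0"
  by (simp add: map_poly_eq_0_iff poly_eq_iff)

lemma cm_smult: "cm (smult c P) = smult (of_int c) (cm P)"
  by (rule poly_eqI) simp

lemma cm_pCons: "cm (pCons a P) = pCons (of_int a) (cm P)"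
  by (simp add: map_poly_pCons)

lemma cm_pcompose: "cm (pcompose P Q) = pcompose (cm P) (cm Q)"
  by (induction P) (simp_all add: pcompose_pCons map_poly_of_int_add map_poly_of_int_mult cm_pCons
      of_int_poly[symmetric] map_poly_pCons)

lemma degree_cm[simp]: "degree (cm P) = degree P"
  by (simp add: degree_map_poly)

lemma order_eq_Z:
  assumes h: "\<And>g. poly (cm g) a = 0 \<longleftrightarrow> poly (cm g) b = 0"
  shows "order a (cm P) = order b (cm P)"
proof (induction "degree P" arbitrary: P rule: less_induct)
  case less
  show ?case
  proof (cases "P = 0")
    case True then show ?thesis by (simp add: order_def)
  next
    case False
    then have nz: "cm P \<noteq> 0" by simp
    show ?thesis
    proof (cases "poly (cm P) a = 0")
      case False
      then have "poly (cm P) b \<noteq> 0" using h by blast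
      then show ?thesis using False order_0I by metis
    next
      case True
      then have rb: "poly (cm P) b = 0" using h by blast
      have "degree P \<noteq> 0"
      proof
        assume "degree P = 0"
        then have "degree (cm P) = 0" by simp
        then obtain c where "cm P = [:c:]" using degree0_coeffs by blast
        then show False using True nz by simp
      qed
      then have "degree (pderiv P) < degree P" by (simp add: degree_pderiv)
      then have "order a (cm (pderiv P)) = order b (cm (pderiv P))" by (rule less)
      then show ?thesis using order_pderiv[OF nz True] order_pderiv[OF nz rb] cm_pderiv by simp
    qed
  qed
qed

lemma pcompose_lin_power: "pcompose ([:-a, 1:] ^ n) [:0, -1:] = [:-a, -1:] ^ (n::nat)"
proof (induction n)
  case 0 then show ?case by (simp add: pcompose_1)
next
  case (Suc n)
  have "pcompose [:-a, 1:] [:0, -1:] = [:-a, -1:]" by (simp add: pcompose_pCons)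
  then show ?case by (simp only: power_Suc pcompose_mult Suc.IH)
qed

lemma order_reflect:
  fixes p :: "complex poly"
  assumes ev: "pcompose p [:0, -1:] = p"
  shows "order a p \<le> order (-a) p"
proof (cases "p = 0")
  case True then show ?thesis by (simp add: order_def)
next
  case False
  have "[:-a, 1:] ^ order a p dvd p" by (rule order_1)
  then obtain r where r: "p = [:-a, 1:] ^ order a p * r" by blast
  have "p = pcompose ([:-a, 1:] ^ order a p) [:0, -1:] * pcompose r [:0, -1:]"
    using ev r pcompose_mult by metis
  also have "pcompose ([:-a, 1:] ^ order a p) [:0, -1:] = [:-a, -1:] ^ order a p"
    by (rule pcompose_lin_power)
  also have "[:-a, -1:] ^ order a p = smult ((-1) ^ order a p) ([:- (-a), 1:] ^ order a p)"
  proof -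
    have "[:-a, -1:] = smult (-1) [:- (-a), 1:]" by simp
    then show ?thesis by (simp only: smult_power)
  qed
  finally have "p = [:- (-a), 1:] ^ order a p * smult ((-1) ^ order a p) (pcompose r [:0, -1:])"
    by (simp add: mult_smult_left mult_smult_right)
  then have "[:- (-a), 1:] ^ order a p dvd p" by (metis dvd_triv_left)
  then show ?thesis using order_divides False by blast
qed

lemma order_reflect_eq:
  fixes p :: "complex poly"
  assumes ev: "pcompose p [:0, -1:] = p"
  shows "order a p = order (-a) p"
  using order_reflect[OF ev, of a] order_reflect[OF ev, of "-a"] by simp

lemma eisenstein_aux:
  fixes A B :: "int poly" and p :: int
  assumes pr: "prime p"
    and dv: "\<And>j. j < degree (A * B) \<Longrightarrow> p dvd coeff (A * B) j"
    and n2: "\<not> p^2 dvd coeff (A * B) 0"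
    and nl: "\<not> p dvd lead_coeff (A * B)"
    and a0: "p dvd coeff A 0"
    and dA: "degree A \<noteq> 0" and dB: "degree B \<noteq> 0"
  shows False
proof -
  have b0: "\<not> p dvd coeff B 0"
  proof
    assume "p dvd coeff B 0"
    then have "p * p dvd coeff A 0 * coeff B 0" using a0 by (simp add: mult_dvd_mono)
    then show False using n2 by (simp add: coeff_mult_0 power2_eq_square)
  qed
  have la: "\<not> p dvd lead_coeff A" using nl by (metis dvd_mult2 lead_coeff_mult)
  define k where "k = (LEAST k. \<not> p dvd coeff A k)"
  have k1: "\<not> p dvd coeff A k" unfolding k_def by (rule LeastI[of _ "degree A"]) (rule la)
  have k2: "\<And>i. i < k \<Longrightarrow> p dvd coeff A i" unfolding k_def using not_less_Least by blast
  have "k \<le> degree A" unfolding k_def by (rule Least_le) (rule la)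
  have AB: "A \<noteq> 0" "B \<noteq> 0" using dA dB by auto
  have "k < degree (A * B)" using \<open>k \<le> degree A\<close> dB degree_mult_eq[OF AB] by simp
  then have dk: "p dvd coeff (A * B) k" by (rule dv)
  have "coeff (A * B) k = (\<Sum>i\<le>k. coeff A i * coeff B (k - i))" by (rule coeff_mult)
  also have "\<dots> = (\<Sum>i<k. coeff A i * coeff B (k - i)) + coeff A k * coeff B 0"
    by (simp add: lessThan_Suc_atMost[symmetric])
  finally have e: "coeff (A * B) k = (\<Sum>i<k. coeff A i * coeff B (k - i)) + coeff A k * coeff B 0" .
  have "p dvd (\<Sum>i<k. coeff A i * coeff B (k - i))" by (rule dvd_sum) (use k2 in auto)
  then have "p dvd coeff A k * coeff B 0" using dk e by (metis dvd_add_right_iff)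
  then show False using pr k1 b0 by (simp add: prime_dvd_mult_iff)
qed

lemma eisenstein:
  fixes A B :: "int poly" and p :: int
  assumes pr: "prime p"
    and dv: "\<And>j. j < degree (A * B) \<Longrightarrow> p dvd coeff (A * B) j"
    and n2: "\<not> p^2 dvd coeff (A * B) 0"
    and nl: "\<not> p dvd lead_coeff (A * B)"
  shows "degree A = 0 \<or> degree B = 0"
proof (rule ccontr)
  assume "\<not> (degree A = 0 \<or> degree B = 0)"
  then have d: "degree A \<noteq> 0" "degree B \<noteq> 0" by auto
  have "p dvd coeff (A * B) 0"
  proof (rule dv)
    have "A \<noteq> 0" "B \<noteq> 0" using d by auto
    then show "0 < degree (A * B)" using d by (simp add: degree_mult_eq)
  qed
  then have "p dvd coeff A 0 \<or> p dvd coeff B 0" using pr by (simp add: coeff_mult_0 prime_dvd_mult_iff)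
  then show False
  proof
    assume "p dvd coeff A 0"
    then show False using eisenstein_aux[OF pr dv n2 nl _ d] by blast
  next
    assume "p dvd coeff B 0"
    then show False using eisenstein_aux[of p B A] pr dv n2 nl d by (simp add: mult.commute)
  qed
qed

definition cyc :: "nat \<Rightarrow> int poly" where "cyc p = (\<Sum>j<p. monom 1 j)"

lemma coeff_cyc: "coeff (cyc p) j = (if j < p then 1 else 0)"
  unfolding cyc_def by (simp add: coeff_sum coeff_monom)

lemma cyc_mult: "cyc p * [:-1, 1:] = monom 1 p - 1"
proof -
  have l: "[:-1, 1:] = monom (1::int) 1 - 1" by (simp add: monom_Suc monom_0 one_pCons)
  have "cyc p * [:-1, 1:] = (\<Sum>j<p. monom 1 (Suc j) - monom 1 j)"
    unfolding cyc_def sum_distrib_right l by (simp add: right_diff_distrib mult_monom)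
  also have "\<dots> = monom 1 p - 1" by (subst sum_lessThan_telescope) (simp add: monom_0 one_pCons)
  finally show ?thesis .
qed

lemma pcompose_pow: "pcompose (q ^ n) r = (pcompose q r) ^ n"
  by (induction n) (simp_all add: pcompose_mult pcompose_1)

lemma poly_cm_cyc:
  fixes z :: complex
  assumes "z ^ p = 1" "z \<noteq> 1"
  shows "poly (cm (cyc p)) z = 0"
proof -
  have "poly (cm (cyc p * [:-1, 1:])) z = poly (cm (monom 1 p - 1)) z" by (simp only: cyc_mult)
  moreover have "poly (cm [:-1, 1:]) z = z - 1" by (simp add: cm_pCons)
  moreover have "poly (cm (monom 1 p - 1)) z = z ^ p - 1"
    by (simp add: map_poly_of_int_diff map_poly_monom poly_monom)
  ultimately have "poly (cm (cyc p)) z * (z - 1) = z ^ p - 1"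
    by (simp only: map_poly_of_int_mult poly_mult)
  then show ?thesis using assms by simp
qed

definition psi :: "nat \<Rightarrow> int poly" where "psi p = pcompose (cyc p) [:1, 1:]"

lemma degree_cyc: "0 < p \<Longrightarrow> degree (cyc p) = p - 1"
proof -
  assume p: "0 < p"
  have "degree (cyc p) \<le> p - 1" by (rule degree_le) (auto simp add: coeff_cyc)
  moreover have "p - 1 \<le> degree (cyc p)" by (rule le_degree) (use p in \<open>simp add: coeff_cyc\<close>)
  ultimately show ?thesis by simp
qed

lemma coeff_psi: "coeff (psi p) j = int (p choose Suc j)"
proof -
  have h2: "pcompose [:-1, 1:] [:1, 1:] = [:0, 1::int:]" by (simp add: pcompose_pCons)
  have h3: "pcompose (monom 1 p) [:1, 1:] = [:1, 1::int:] ^ p"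
    by (simp add: monom_altdef pcompose_pow pcompose_pCons)
  have e1: "pcompose (cyc p * [:-1, 1:]) [:1, 1:] = psi p * [:0, 1:]"
    unfolding psi_def by (simp only: pcompose_mult h2)
  have e2: "pcompose (monom 1 p - 1) [:1, 1:] = [:1, 1:] ^ p - (1 :: int poly)"
    by (simp only: pcompose_diff pcompose_1 h3)
  have e: "psi p * [:0, 1:] = [:1, 1:] ^ p - 1" using e1 e2 cyc_mult by metis
  have "coeff (psi p * [:0, 1:]) (Suc j) = coeff (psi p) j" by simp
  also have "coeff (psi p * [:0, 1:]) (Suc j) = coeff ([:1, 1:] ^ p) (Suc j)" unfolding e by (simp add: coeff_diff)
  also have "\<dots> = int (p choose Suc j)"
  proof (cases "Suc j \<le> p")
    case True then show ?thesis by (simp add: coeff_linear_poly_power)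
  next
    case False
    then have "coeff ([:1, 1::int:] ^ p) (Suc j) = 0"
      by (intro coeff_eq_0) (metis degree_linear_power degree_pCons_eq_if not_le one_neq_zero)
    then show ?thesis using False by simp
  qed
  finally show ?thesis by simp
qed

lemma degree_psi: "0 < p \<Longrightarrow> degree (psi p) = p - 1"
  unfolding psi_def by (simp add: degree_pcompose degree_cyc)

lemma psi_irred:
  fixes A B :: "int poly"
  assumes pr: "prime p" and AB: "A * B = smult e (psi p)" and e: "e = 1 \<or> e = -1"
  shows "degree A = 0 \<or> degree B = 0"
proof (rule eisenstein[of "int p"])
  show "prime (int p)" using pr by simp
  have p0: "0 < p" using pr prime_gt_0_nat by blast
  have nd1: "\<not> int p dvd 1"
  proof
    assume "int p dvd 1"
    then have "\<bar>int p\<bar> = 1" by (simp add: zdvd1_eq)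
    then have "p = 1" by simp
    then show False using pr by simp
  qed
  have de: "degree (A * B) = p - 1" using AB e p0 by (auto simp: degree_psi)
  have ce: "coeff (A * B) j = e * int (p choose Suc j)" for j using AB by (simp add: coeff_psi)
  show "int p dvd coeff (A * B) j" if "j < degree (A * B)" for j
  proof -
    have "Suc j < p" using that de by simp
    then have "p dvd (p choose Suc j)" using dvd_choose_prime[of "Suc j" p] pr p0 by simp
    then show ?thesis unfolding ce by simp
  qed
  have "coeff (A * B) 0 = e * int p" using ce[of 0] by simp
  moreover have "\<not> (int p)^2 dvd int p"
  proof
    assume "(int p)^2 dvd int p"
    then have "int p * int p dvd int p * 1" by (simp add: power2_eq_square)
    then have "int p dvd 1" using p0 by (subst (asm) dvd_mult_cancel_left) auto
    then show False using nd1 by simp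
  qed
  ultimately show "\<not> (int p)^2 dvd coeff (A * B) 0" using e by auto
  have "lead_coeff (A * B) = e" using ce[of "p - 1"] de p0 by simp
  then show "\<not> int p dvd lead_coeff (A * B)" using e nd1 by auto
qed

lemma poly_cm_smult: "poly (cm (smult c P)) x = of_int c * poly (cm P) x"
  by (simp add: cm_smult)

lemma content_cyc: "0 < p \<Longrightarrow> content (cyc p) = 1"
proof -
  assume p: "0 < p"
  have "content (cyc p) dvd coeff (cyc p) 0" by (rule content_dvd_coeff)
  then have "content (cyc p) dvd 1" using p by (simp add: coeff_cyc)
  then have "\<bar>content (cyc p)\<bar> = 1" by (simp add: zdvd1_eq)
  moreover have "\<bar>content (cyc p)\<bar> = content (cyc p)" using normalize_content[of "cyc p"] by simp
  ultimately show ?thesis by simp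
qed

lemma degree_ne0_if_root:
  assumes "r \<noteq> 0" "poly (cm r) z = 0"
  shows "degree r \<noteq> 0"
proof
  assume "degree r = 0"
  then have "degree (cm r) = 0" by simp
  then obtain a where "cm r = [:a:]" using degree0_coeffs by blast
  moreover have "cm r \<noteq> 0" using assms(1) by simp
  ultimately show False using assms(2) by auto
qed

theorem conj_roots:
  fixes p :: nat and g :: "int poly" and z w :: complex
  assumes pr: "prime p" and z: "z ^ p = 1" "z \<noteq> 1" and w: "w ^ p = 1" "w \<noteq> 1"
    and gz: "poly (cm g) z = 0"
  shows "poly (cm g) w = 0"
proof -
  have p0: "0 < p" using pr prime_gt_0_nat by blast
  define S where "S = {r::int poly. r \<noteq> 0 \<and> poly (cm r) z = 0}"
  have cyc0: "cyc p \<noteq> 0"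
  proof
    assume "cyc p = 0"
    then have "coeff (cyc p) 0 = 0" by simp
    then show False using p0 by (simp add: coeff_cyc)
  qed
  have cycS: "cyc p \<in> S" unfolding S_def using cyc0 poly_cm_cyc[OF z] by simp
  define d where "d = (LEAST d. \<exists>r\<in>S. degree r = d)"
  have "\<exists>r\<in>S. degree r = d" unfolding d_def by (rule LeastI_ex) (use cycS in blast)
  then obtain r0 where r0: "r0 \<in> S" "degree r0 = d" by blast
  have dmin: "\<And>r. r \<in> S \<Longrightarrow> d \<le> degree r" unfolding d_def by (rule Least_le) blast
  define r where "r = primitive_part r0"
  have r00: "r0 \<noteq> 0" using r0 S_def by simp
  have cr: "content r = 1" unfolding r_def using r00 by simp
  have r0r: "r0 = smult (content r0) r" unfolding r_def by simp
  have c0: "content r0 \<noteq> 0" using r00 by simp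
  have rS: "r \<in> S"
  proof -
    have "poly (cm r0) z = of_int (content r0) * poly (cm r) z" by (subst r0r) (rule poly_cm_smult)
    then have "poly (cm r) z = 0" using r0 c0 unfolding S_def by auto
    moreover have "r \<noteq> 0" unfolding r_def using r00 by simp
    ultimately show ?thesis unfolding S_def by simp
  qed
  have dr: "degree r = d" unfolding r_def using r0 by simp
  have r0': "r \<noteq> 0" using rS S_def by simp
  have key: "\<exists>c s. c \<noteq> 0 \<and> smult c h = r * s" if hz: "poly (cm h) z = 0" for h
  proof -
    obtain s t where st: "pseudo_divmod h r = (s, t)" by (cases "pseudo_divmod h r")
    define c where "c = coeff r (degree r) ^ (Suc (degree h) - degree r)"
    have e1: "smult c h = r * s + t" unfolding c_def by (rule pseudo_divmod(1)[OF r0' st])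
    have e2: "t = 0 \<or> degree t < degree r" by (rule pseudo_divmod(2)[OF r0' st])
    have cnz: "c \<noteq> 0" unfolding c_def using r0' by simp
    have "poly (cm (smult c h)) z = poly (cm (r * s + t)) z" by (simp only: e1)
    then have tz: "poly (cm t) z = 0" using hz rS unfolding S_def
      by (simp add: poly_cm_smult map_poly_of_int_add map_poly_of_int_mult)
    have "t = 0"
    proof (rule ccontr)
      assume "t \<noteq> 0"
      then have "degree t < d" using e2 dr by simp
      with tz have "t \<in> S" "degree t < d" using \<open>t \<noteq> 0\<close> unfolding S_def by auto
      then show False using dmin[of t] by simp
    qed
    then show ?thesis using e1 cnz by auto
  qed
  obtain c s where cs: "c \<noteq> 0" "smult c (cyc p) = r * s" using key[OF poly_cm_cyc[OF z]] by blast
  have ds: "degree s = 0"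
  proof (rule ccontr)
    assume dsn: "degree s \<noteq> 0"
    have "content (r * s) = content s" using cr by (simp add: content_mult)
    moreover have "content (smult c (cyc p)) = \<bar>c\<bar>" using content_cyc[OF p0] by simp
    ultimately have cs2: "content s = \<bar>c\<bar>" using cs by simp
    define s' where "s' = primitive_part s"
    have "s = smult (content s) s'" unfolding s'_def by simp
    then have ss: "s = smult (abs c) s'" unfolding cs2 .
    have "smult (abs c) (smult (sgn c) (cyc p)) = smult c (cyc p)" by (simp add: abs_mult_sgn)
    also have "\<dots> = r * s" by (rule cs(2))
    also have "\<dots> = smult (abs c) (r * s')" unfolding ss by (simp add: mult_smult_right)
    finally have "smult (abs c) (r * s') = smult (abs c) (smult (sgn c) (cyc p))" by simp
    moreover have "abs c \<noteq> 0" using cs by simp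
    ultimately have rs: "r * s' = smult (sgn c) (cyc p)" using smult_cancel by blast
    have "pcompose r [:1, 1:] * pcompose s' [:1, 1:] = smult (sgn c) (psi p)"
      unfolding psi_def pcompose_mult[symmetric] rs by (simp add: pcompose_smult)
    moreover have "sgn c = 1 \<or> sgn c = -1" using cs by (auto simp: sgn_if)
    ultimately have "degree (pcompose r [:1, 1:]) = 0 \<or> degree (pcompose s' [:1, 1:]) = 0"
      by (rule psi_irred[OF pr])
    moreover have "degree r \<noteq> 0" using degree_ne0_if_root[of r z] rS unfolding S_def by simp
    moreover have "degree s' = degree s" unfolding s'_def by simp
    ultimately show False using dsn by (simp add: degree_pcompose)
  qed
  then obtain s0 where s0: "s = [:s0:]" using degree0_coeffs by blast
  have "s0 \<noteq> 0"
  proof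
    assume "s0 = 0"
    then have "smult c (cyc p) = 0" using cs(2) s0 by simp
    then show False using cs(1) cyc0 by simp
  qed
  have "poly (cm (smult c (cyc p))) w = poly (cm (r * s)) w" by (simp only: cs)
  then have "of_int s0 * poly (cm r) w = 0" using poly_cm_cyc[OF w] s0
    by (simp add: poly_cm_smult map_poly_of_int_mult cm_pCons)
  then have rw: "poly (cm r) w = 0" using \<open>s0 \<noteq> 0\<close> by simp
  obtain c' s' where cs': "c' \<noteq> 0" "smult c' g = r * s'" using key[OF gz] by blast
  have "poly (cm (smult c' g)) w = poly (cm (r * s')) w" by (simp only: cs')
  then have "of_int c' * poly (cm g) w = 0" using rw by (simp add: poly_cm_smult map_poly_of_int_mult)
  then show ?thesis using cs' by simp
qed

lemma coprime_lin:
  fixes x y :: complex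
  assumes "x \<noteq> y"
  shows "coprime [:-x, 1:] [:-y, 1:]"
proof (rule coprimeI)
  fix c assume "c dvd [:-x, 1:]" "c dvd [:-y, 1:]"
  then have "c dvd [:-x, 1:] - [:-y, 1:]" by (rule dvd_diff)
  then have "c dvd [:y - x:]" by simp
  moreover have "is_unit [:y - x:]" using assms by (simp add: is_unit_const_poly_iff dvd_field_iff)
  ultimately show "is_unit c" using dvd_unit_imp_unit by blast
qed

lemma prod_lin_dvd:
  fixes q :: "complex poly"
  assumes "finite A" "\<And>z. z \<in> A \<Longrightarrow> [:-z, 1:] ^ n dvd q"
  shows "(\<Prod>z\<in>A. [:-z, 1:] ^ n) dvd q"
  using assms
proof (induction A rule: finite_induct)
  case empty then show ?case by simp
next
  case (insert x F)
  have "coprime ([:-x, 1:] ^ n) (\<Prod>z\<in>F. [:-z, 1:] ^ n)"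
  proof -
    have "coprime ([:-x, 1:] ^ n) ([:-i, 1:] ^ n)" if "i \<in> F" for i
    proof -
      have "x \<noteq> i" using insert that by auto
      then have "coprime [:-x, 1:] [:-i, 1:]" by (rule coprime_lin)
      then show ?thesis by (simp add: coprime_power_left_iff coprime_power_right_iff)
    qed
    then show ?thesis using prod_coprime_right[of F "([:-x, 1:] ^ n)" "\<lambda>z. [:-z, 1:] ^ n"] by blast
  qed
  then show ?case using insert by (simp add: divides_mult)
qed

lemma degree_prod_lin:
  fixes A :: "complex set"
  shows "finite A \<Longrightarrow> degree (\<Prod>z\<in>A. [:-z, 1:] ^ n) = n * card A"
  by (subst degree_prod_eq_sum_degree) (auto simp: degree_linear_power)

lemma even_poly_reflect:
  fixes p :: "complex poly"
  assumes "\<And>j. coeff p j \<noteq> 0 \<Longrightarrow> even j"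
  shows "pcompose p [:0, -1:] = p"
proof -
  have "poly (pcompose p [:0, -1:]) x = poly p x" for x
  proof -
    have "poly (pcompose p [:0, -1:]) x = poly p (-x)" by (simp add: poly_pcompose)
    also have "\<dots> = (\<Sum>i\<le>degree p. coeff p i * (-x) ^ i)" by (rule poly_altdef)
    also have "\<dots> = (\<Sum>i\<le>degree p. coeff p i * x ^ i)"
    proof (rule sum.cong)
      fix i
      show "coeff p i * (-x) ^ i = coeff p i * x ^ i"
        using assms[of i] by (cases "coeff p i = 0") auto
    qed simp
    also have "\<dots> = poly p x" by (rule poly_altdef[symmetric])
    finally show ?thesis .
  qed
  then show ?thesis using poly_eq_poly_eq_iff by blast
qed

lemma poly_cm_cnj: "poly (cm g) (cnj z) = cnj (poly (cm g) z)"
proof -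
  have "map_poly cnj (cm g) = cm g" by (rule poly_eqI) (simp add: coeff_map_poly)
  then show ?thesis using poly_cnj[of "cm g" z] by simp
qed

lemma poly_cm_reflect: "poly (cm (pcompose g [:0, -1:])) z = poly (cm g) (- z)"
  by (simp add: cm_pcompose poly_pcompose cm_pCons)

lemma cm_sum: "cm (sum f A) = (\<Sum>j\<in>A. cm (f j))"
  by (induction A rule: infinite_finite_induct) (auto simp: map_poly_of_int_add)

lemma geom_uu:
  fixes z :: complex
  assumes "z ^ (2 * N) = 1" "z ^ 2 \<noteq> 1"
  shows "poly (cm (uu N)) z = 0"
proof -
  have "poly (cm (uu N)) z = (\<Sum>j<N. (z ^ 2) ^ j)"
    unfolding uu_def by (simp add: map_poly_monom poly_monom poly_sum power_mult cm_sum)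
  also have "\<dots> = ((z ^ 2) ^ N - 1) / (z ^ 2 - 1)" by (rule geometric_sum) (use assms in auto)
  also have "\<dots> = 0" using assms by (simp add: power_mult[symmetric])
  finally show ?thesis .
qed

lemma shift_eq:
  assumes "qpow e1 * phi A = qpow e2 * phi B"
  shows "(\<exists>s. monom 1 s * A = B) \<or> (\<exists>s. A = monom 1 s * B)"
proof (cases "e2 \<le> e1")
  case True
  have "qpow (- e2) * (qpow e1 * phi A) = qpow (- e2) * (qpow e2 * phi B)" using assms by simp
  then have "qpow (e1 - e2) * phi A = phi B" by (simp add: mult.assoc[symmetric] qpow_mult)
  then have "phi (monom 1 (nat (e1 - e2)) * A) = phi B" using True by (simp add: phi_mult phi_monom)
  then show ?thesis using phi_inj by blast
next
  case False
  have "qpow (- e1) * (qpow e1 * phi A) = qpow (- e1) * (qpow e2 * phi B)" using assms by simp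
  then have "phi A = qpow (e2 - e1) * phi B" by (simp add: mult.assoc[symmetric] qpow_mult)
  then have "phi A = phi (monom 1 (nat (e2 - e1)) * B)" using False by (simp add: phi_mult phi_monom)
  then show ?thesis using phi_inj by blast
qed

lemma coeff_uu: "coeff (uu N) i = (if even i \<and> i < 2 * N then 1 else 0)"
proof -
  have "coeff (uu N) i = (\<Sum>j<N. if j = i div 2 then (if even i then 1 else 0) else 0)"
    unfolding uu_def coeff_sum by (rule sum.cong) (auto simp: coeff_monom)
  also have "\<dots> = (if even i \<and> i < 2 * N then 1 else 0)" by auto
  finally show ?thesis .
qed

lemma degree_uu: "0 < N \<Longrightarrow> degree (uu N) = 2 * N - 2"
proof -
  assume N: "0 < N"
  have "degree (uu N) \<le> 2 * N - 2"
  proof (rule degree_le, intro allI impI)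
    fix i assume "2 * N - 2 < i"
    then show "coeff (uu N) i = 0" by (auto simp: coeff_uu)
  qed
  moreover have "2 * N - 2 \<le> degree (uu N)" by (rule le_degree) (use N in \<open>simp add: coeff_uu\<close>)
  ultimately show ?thesis by simp
qed

lemma lead_uu: "0 < N \<Longrightarrow> lead_coeff (uu N) = 1"
  by (simp add: degree_uu coeff_uu)

lemma omega_facts:
  fixes N k :: nat
  assumes pr: "prime N" and k: "coprime k (2 * N)"
  defines "\<omega> \<equiv> exp (\<i> * of_real pi * of_nat k / of_nat N)"
  shows "\<omega> ^ N = -1" "\<omega> ^ 2 \<noteq> 1"
proof -
  have N0: "N \<noteq> 0" using pr by auto
  have ok: "odd k"
  proof
    assume "even k"
    then have "2 dvd gcd k (2 * N)" by simp
    then show False using k by simp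
  qed
  have "\<omega> ^ N = exp (of_nat N * (\<i> * of_real pi * of_nat k / of_nat N))"
    unfolding \<omega>_def by (rule exp_of_nat_mult[symmetric])
  also have "\<dots> = exp (of_nat k * (\<i> * of_real pi))" using N0 by (simp add: field_simps)
  also have "\<dots> = (-1) ^ k" by (simp add: exp_of_nat_mult)
  also have "\<dots> = -1" using ok by simp
  finally show "\<omega> ^ N = -1" .
  show "\<omega> ^ 2 \<noteq> 1"
  proof
    assume h: "\<omega> ^ 2 = 1"
    have "\<omega> ^ 2 = exp (of_nat 2 * (\<i> * of_real pi * of_nat k / of_nat N))"
      unfolding \<omega>_def by (rule exp_of_nat_mult[symmetric])
    also have "\<dots> = exp (\<i> * of_real (2 * pi * k / N))" by (simp add: field_simps)
    finally have "Re (exp (\<i> * of_real (2 * pi * k / N))) = 1" using h by simp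
    then have "cos (2 * pi * k / N) = 1" by (simp add: Re_exp)
    then obtain n :: int where n: "2 * pi * k / N = of_int n * 2 * pi" using cos_one_2pi_int by blast
    then have "real k = real_of_int n * N" using N0 by (simp add: field_simps)
    then have "int k = n * int N" by (metis of_int_eq_iff of_int_mult of_int_of_nat_eq)
    then have "int N dvd int k" by simp
    then have "N dvd k" by simp
    then have "N dvd gcd k (2 * N)" by (intro gcd_greatest) auto
    moreover have "gcd k (2 * N) = 1" using k by (simp add: coprime_iff_gcd_eq_1)
    ultimately have "N dvd 1" by simp
    then show False using pr by simp
  qed
qed

lemma sq_eq_1: "(z::complex) ^ 2 = 1 \<longleftrightarrow> z = 1 \<or> z = -1"
proof -
  have "z ^ 2 - 1 = (z - 1) * (z + 1)" by (simp add: algebra_simps power2_eq_square)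
  then show ?thesis by (rule_tac power2_eq_1_iff)
qed

lemma sq_eq_sq: "(z::complex) ^ 2 = w ^ 2 \<longleftrightarrow> z = w \<or> z = - w"
proof -
  have "z ^ 2 - w ^ 2 = (z - w) * (z + w)" by (simp add: algebra_simps power2_eq_square)
  then show ?thesis by (rule_tac power2_eq_iff)
qed

lemma orders_equal:
  fixes N :: nat and \<omega> \<zeta> :: complex and P :: "int poly"
  assumes pr: "prime N" and w1: "\<omega> ^ N = -1" and w2: "\<omega> ^ 2 \<noteq> 1"
    and ev: "odd N \<Longrightarrow> (\<forall>j. coeff P j \<noteq> 0 \<longrightarrow> even j)"
    and z1: "\<zeta> ^ (2 * N) = 1" and z2: "\<zeta> ^ 2 \<noteq> 1"
  shows "order \<zeta> (cm P) = order \<omega> (cm P)"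
proof (cases "N = 2")
  case True
  have "\<zeta> ^ 2 = -1"
  proof -
    have "(\<zeta> ^ 2) ^ 2 = 1" using z1 True by (simp add: power_mult[symmetric])
    then show ?thesis using z2 sq_eq_1 by blast
  qed
  moreover have "\<omega> ^ 2 = -1" using w1 True by simp
  ultimately have "\<zeta> = \<omega> \<or> \<zeta> = - \<omega>" using sq_eq_sq[of \<zeta> \<omega>] by simp
  moreover have "cnj \<omega> = - \<omega>"
  proof -
    have "\<omega> ^ 2 = \<i> ^ 2" using \<open>\<omega> ^ 2 = -1\<close> by simp
    then have "\<omega> = \<i> \<or> \<omega> = - \<i>" using sq_eq_sq[of \<omega> \<i>] by simp
    then show ?thesis by auto
  qed
  moreover have "order (cnj \<omega>) (cm P) = order \<omega> (cm P)"
  proof (rule order_eq_Z)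
    fix g
    show "poly (cm g) (cnj \<omega>) = 0 \<longleftrightarrow> poly (cm g) \<omega> = 0" by (simp add: poly_cm_cnj)
  qed
  ultimately show ?thesis by auto
next
  case False
  have "N > 2" using prime_ge_2_nat[OF pr] False by simp
  then have oN: "odd N" using prime_odd_nat[OF pr] by simp
  have wm: "- \<omega> \<noteq> 1"
  proof
    assume "- \<omega> = 1"
    then have "\<omega> = -1" by (simp add: minus_equation_iff)
    then show False using w2 by simp
  qed
  have wN: "(- \<omega>) ^ N = 1" using w1 power_minus_odd[OF oN, of \<omega>] by simp
  have A: "order x (cm P) = order \<omega> (cm P)" if x1: "x ^ N = -1" "x ^ 2 \<noteq> 1" for x
  proof (rule order_eq_Z)
    have xm: "- x \<noteq> 1"
    proof
      assume "- x = 1"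
      then have "x = -1" by (simp add: minus_equation_iff)
      then show False using x1(2) by simp
    qed
    have xN: "(- x) ^ N = 1" using x1 power_minus_odd[OF oN, of x] by simp
    fix g
    show "poly (cm g) x = 0 \<longleftrightarrow> poly (cm g) \<omega> = 0"
    proof
      assume "poly (cm g) x = 0"
      then have "poly (cm (pcompose g [:0, -1:])) (- x) = 0" by (simp add: poly_cm_reflect)
      then have "poly (cm (pcompose g [:0, -1:])) (- \<omega>) = 0" using conj_roots[OF pr xN xm wN wm] by blast
      then show "poly (cm g) \<omega> = 0" by (simp add: poly_cm_reflect)
    next
      assume "poly (cm g) \<omega> = 0"
      then have "poly (cm (pcompose g [:0, -1:])) (- \<omega>) = 0" by (simp add: poly_cm_reflect)
      then have "poly (cm (pcompose g [:0, -1:])) (- x) = 0" using conj_roots[OF pr wN wm xN xm] by blast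
      then show "poly (cm g) x = 0" by (simp add: poly_cm_reflect)
    qed
  qed
  have "\<zeta> ^ (2 * N) = (\<zeta> ^ N) ^ 2" by (simp only: mult.commute[of 2 N] power_mult)
  then have "(\<zeta> ^ N) ^ 2 = 1" using z1 by simp
  then have "\<zeta> ^ N = 1 \<or> \<zeta> ^ N = -1" using sq_eq_1[of "\<zeta> ^ N"] by simp
  then show ?thesis
  proof
    assume "\<zeta> ^ N = -1"
    then show ?thesis using A[OF _ z2] by simp
  next
    assume h: "\<zeta> ^ N = 1"
    have "pcompose (cm P) [:0, -1:] = cm P"
    proof (rule even_poly_reflect)
      fix j assume "coeff (cm P) j \<noteq> 0"
      then have "coeff P j \<noteq> 0" by simp
      then show "even j" using ev oN by blast
    qed
    then have "order \<zeta> (cm P) = order (- \<zeta>) (cm P)" by (rule order_reflect_eq)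
    also have "\<dots> = order \<omega> (cm P)"
    proof (rule A)
      show "(- \<zeta>) ^ N = -1" using h power_minus_odd[OF oN, of \<zeta>] by simp
      show "(- \<zeta>) ^ 2 \<noteq> 1" using z2 by simp
    qed
    finally show ?thesis .
  qed
qed

lemma keys_bounds:
  fixes f :: lpoly
  assumes "e \<in> Poly_Mapping.keys f"
  shows "Min (Poly_Mapping.keys f) \<le> e" "e \<le> Max (Poly_Mapping.keys f)"
  using assms by (simp_all add: Min_le Max_ge)

lemma lp_setup:
  fixes f :: lpoly
  assumes fnz: "f \<noteq> 0"
  defines "m \<equiv> Min (Poly_Mapping.keys f)"
  shows "\<exists>P0. lp_to_poly f = cm P0 \<and> f = qpow m * phi P0 \<and> (\<forall>j. coeff P0 j = lk f (m + int j))
           \<and> m \<in> Poly_Mapping.keys f"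
proof -
  have kne: "Poly_Mapping.keys f \<noteq> {}" using fnz by simp
  define M where "M = Max (Poly_Mapping.keys f)"
  have mk: "m \<in> Poly_Mapping.keys f" unfolding m_def using kne by (simp add: Min_in)
  define L where "L = nat (M - m) + 1"
  define P0 where "P0 = Poly (map (\<lambda>j. lk f (m + int j)) [0..<L])"
  have zero_out: "lk f e = 0" if "e < m \<or> M < e" for e
  proof (rule ccontr)
    assume "lk f e \<noteq> 0"
    then have "e \<in> Poly_Mapping.keys f" by (simp add: in_keys_iff)
    then have "Min (Poly_Mapping.keys f) \<le> e" "e \<le> Max (Poly_Mapping.keys f)" by (rule keys_bounds)+
    then show False using that unfolding m_def M_def by linarith
  qed
  have cP0: "coeff P0 j = lk f (m + int j)" for j
  proof (cases "j < L")
    case True then show ?thesis by (simp add: P0_def nth_default_def)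
  next
    case False
    then have "M < m + int j" unfolding L_def by linarith
    then show ?thesis using zero_out[of "m + int j"] False by (simp add: P0_def nth_default_def)
  qed
  have lp: "lp_to_poly f = cm P0"
  proof (rule poly_eqI)
    fix j
    have "lp_to_poly f = Poly (map (\<lambda>j. of_int (lk f (m + int j))) [0..<L])"
      unfolding lp_to_poly_def Let_def L_def m_def M_def using kne by simp
    then have "coeff (lp_to_poly f) j = (if j < L then of_int (lk f (m + int j)) else 0)"
      by (simp add: nth_default_def)
    also have "\<dots> = coeff (cm P0) j" by (simp add: cP0 P0_def nth_default_def)
    finally show "coeff (lp_to_poly f) j = coeff (cm P0) j" .
  qed
  have fr: "f = qpow m * phi P0"
  proof (rule poly_mapping_eqI)
    fix e
    show "lk f e = lk (qpow m * phi P0) e"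
    proof (cases "m \<le> e")
      case True
      then have "m + int (nat (e - m)) = e" by simp
      then show ?thesis using True by (simp add: lookup_qpow_mult lookup_phi cP0)
    next
      case False
      then show ?thesis using zero_out[of e] by (simp add: lookup_qpow_mult lookup_phi)
    qed
  qed
  show ?thesis using lp fr cP0 mk by blast
qed

theorem proposition2p5:
  fixes N k n :: nat and V :: "nat \<Rightarrow> braid \<Rightarrow> lpoly" and w :: braid
  assumes "prime N"
    and "0 < k" and "k < 2 * N" and "coprime k (2 * N)"
    and "is_V N V"
    and "1 \<le> n" and "braid_word n w"
  shows "\<exists>Vt :: lpoly.
           V n w = U N ^ root_mult (V n w) (exp (\<i> * of_real pi * of_nat k / of_nat N)) * Vt
           \<and> \<not> U N dvd Vt"
proof -
  note pr = assms(1) and kc = assms(4) and isV = assms(5) and nw = assms(6,7)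
  define f where "f = V n w"
  define \<omega> where "\<omega> = exp (\<i> * of_real pi * of_nat k / of_nat N)"
  have N2: "2 \<le> N" using pr by (rule prime_ge_2_nat)
  have fnz: "f \<noteq> 0" unfolding f_def using V_pos[OF isV _ nw] Qpos_nonzero N2 by simp
  obtain P0 where lp: "lp_to_poly f = cm P0" and fr: "f = qpow (Min (Poly_Mapping.keys f)) * phi P0"
    and cP0: "\<And>j. coeff P0 j = lk f (Min (Poly_Mapping.keys f) + int j)"
    and mk: "Min (Poly_Mapping.keys f) \<in> Poly_Mapping.keys f"
    using lp_setup[OF fnz] by blast
  define m where "m = Min (Poly_Mapping.keys f)"
  have P0nz: "P0 \<noteq> 0" using fr fnz by auto
  have w1: "\<omega> ^ N = -1" and w2: "\<omega> ^ 2 \<noteq> 1" unfolding \<omega>_def using omega_facts[OF pr kc] by auto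
  have w3: "\<omega> ^ (2 * N) = 1"
  proof -
    have "\<omega> ^ (2 * N) = (\<omega> ^ N) ^ 2" by (simp only: mult.commute[of 2 N] power_mult)
    then show ?thesis using w1 by simp
  qed
  have ev: "\<forall>j. coeff P0 j \<noteq> 0 \<longrightarrow> even j" if oN: "odd N"
  proof (intro allI impI)
    fix j assume "coeff P0 j \<noteq> 0"
    then have "m + int j \<in> Poly_Mapping.keys f" using cP0 m_def by (simp add: in_keys_iff)
    moreover have "allpar True f" unfolding f_def by (rule V_even[OF isV oN nw])
    ultimately have h1: "even (m + int j)" "even m" using mk m_def unfolding allpar_def by blast+
    then have "even (int j)" by (simp add: even_add)
    then show "even j" by simp
  qed
  define \<nu> where "\<nu> = order \<omega> (cm P0)"
  define R where "R = {z::complex. z ^ (2 * N) = 1} - {1, -1}"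
  have finU: "finite {z::complex. z ^ (2 * N) = 1}" by (rule finite_roots_unity) (use N2 in simp)
  have finR: "finite R" unfolding R_def using finU by simp
  have cardR: "card R = 2 * N - 2"
  proof -
    have "card {z::complex. z ^ (2 * N) = 1} = 2 * N" by (rule card_roots_unity_eq) (use N2 in simp)
    moreover have "{1, -1} \<subseteq> {z::complex. z ^ (2 * N) = 1}" by auto
    moreover note finU
    ultimately show ?thesis unfolding R_def by (simp add: card_Diff_subset)
  qed
  have Rsq: "z ^ 2 \<noteq> 1" "z ^ (2 * N) = 1" if "z \<in> R" for z
    using that sq_eq_1[of z] unfolding R_def by auto
  have ordR: "order z (cm P0) = \<nu>" if "z \<in> R" for z
    unfolding \<nu>_def by (rule orders_equal[OF pr w1 w2 ev Rsq(2)[OF that] Rsq(1)[OF that]])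
  define L where "L = (\<Prod>z\<in>R. [:-z, 1:] ^ \<nu>)"
  have L_P0: "L dvd cm P0" unfolding L_def
    by (rule prod_lin_dvd[OF finR]) (use ordR P0nz in \<open>simp add: order_divides\<close>)
  have u_root: "poly (cm (uu N)) z = 0" if "z \<in> R" for z
    using geom_uu Rsq[OF that] by blast
  have L_u: "L dvd cm (uu N ^ \<nu>)" unfolding L_def
  proof (rule prod_lin_dvd[OF finR])
    fix z assume "z \<in> R"
    then have "[:-z, 1:] dvd cm (uu N)" using u_root poly_eq_0_iff_dvd by blast
    then show "[:-z, 1:] ^ \<nu> dvd cm (uu N ^ \<nu>)" by (simp add: map_poly_of_int_power dvd_power_same)
  qed
  have N0: "0 < N" using N2 by simp
  have uunz: "uu N \<noteq> 0" using lead_uu[OF N0] by auto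
  have degL: "degree L = \<nu> * (2 * N - 2)" unfolding L_def using degree_prod_lin[OF finR] cardR by simp
  have degu: "degree (uu N ^ \<nu>) = \<nu> * (2 * N - 2)"
    by (simp add: degree_power_eq uunz degree_uu[OF N0])
  have leadu: "lead_coeff (uu N ^ \<nu>) = 1" by (simp add: lead_coeff_power lead_uu[OF N0])
  have uupnz: "uu N ^ \<nu> \<noteq> 0" using uunz by simp
  obtain R0 T where qr: "pseudo_divmod P0 (uu N ^ \<nu>) = (R0, T)" by (cases "pseudo_divmod P0 (uu N ^ \<nu>)")
  have e1: "P0 = uu N ^ \<nu> * R0 + T" using pseudo_divmod(1)[OF uupnz qr] leadu by simp
  have e2: "T = 0 \<or> degree T < degree (uu N ^ \<nu>)" by (rule pseudo_divmod(2)[OF uupnz qr])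
  have T0: "T = 0"
  proof (rule ccontr)
    assume Tnz: "T \<noteq> 0"
    have "cm T = cm P0 - cm (uu N ^ \<nu>) * cm R0"
      using e1 by (metis add_diff_cancel_left' map_poly_of_int_add map_poly_of_int_mult)
    moreover have "L dvd cm P0 - cm (uu N ^ \<nu>) * cm R0" using L_P0 L_u by (simp add: dvd_diff)
    ultimately have "L dvd cm T" by simp
    then have "degree L \<le> degree (cm T)" using Tnz by (intro dvd_imp_degree_le) auto
    then show False using e2 Tnz degL degu by simp
  qed
  have P0eq: "P0 = uu N ^ \<nu> * R0" using e1 T0 by simp
  define Vt where "Vt = qpow (m + int \<nu> * (int N - 1)) * phi R0"
  have rm: "root_mult (V n w) (exp (\<i> * of_real pi * of_nat k / of_nat N)) = \<nu>"
    unfolding root_mult_def f_def[symmetric] \<omega>_def[symmetric] lp \<nu>_def ..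
  have part1: "V n w = U N ^ \<nu> * Vt"
  proof -
    have "U N ^ \<nu> * Vt = qpow (int \<nu> * (1 - int N)) * phi (uu N ^ \<nu>) * (qpow (m + int \<nu> * (int N - 1)) * phi R0)"
      unfolding Vt_def U_phi by (simp add: power_mult_distrib qpow_power phi_power)
    also have "\<dots> = (qpow (int \<nu> * (1 - int N)) * qpow (m + int \<nu> * (int N - 1))) * phi (uu N ^ \<nu> * R0)"
      by (simp add: phi_mult ac_simps)
    also have "qpow (int \<nu> * (1 - int N)) * qpow (m + int \<nu> * (int N - 1)) = qpow m"
      by (simp add: qpow_mult algebra_simps)
    finally show ?thesis using fr P0eq f_def m_def by simp
  qed
  have R0nz: "R0 \<noteq> 0" using P0eq P0nz by auto
  have R0w: "poly (cm R0) \<omega> \<noteq> 0"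
  proof
    assume h: "poly (cm R0) \<omega> = 0"
    have wR: "\<omega> \<in> R" unfolding R_def using w2 w3 by auto
    have "[:-\<omega>, 1:] dvd cm (uu N)" using u_root[OF wR] poly_eq_0_iff_dvd by blast
    then have "[:-\<omega>, 1:] ^ \<nu> dvd cm (uu N ^ \<nu>)" by (simp add: map_poly_of_int_power dvd_power_same)
    moreover have "[:-\<omega>, 1:] dvd cm R0" using h poly_eq_0_iff_dvd by blast
    ultimately have "[:-\<omega>, 1:] ^ \<nu> * [:-\<omega>, 1:] dvd cm (uu N ^ \<nu>) * cm R0" by (rule mult_dvd_mono)
    then have "[:-\<omega>, 1:] ^ Suc \<nu> dvd cm (uu N ^ \<nu>) * cm R0" by (simp only: power_Suc2)
    then have "[:-\<omega>, 1:] ^ Suc \<nu> dvd cm P0" using P0eq by (simp add: map_poly_of_int_mult)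
    then have "cm P0 = 0 \<or> Suc \<nu> \<le> order \<omega> (cm P0)" by (simp only: order_divides)
    then have "Suc \<nu> \<le> order \<omega> (cm P0)" using P0nz by simp
    then show False unfolding \<nu>_def by simp
  qed
  have part2: "\<not> U N dvd Vt"
  proof
    assume "U N dvd Vt"
    then obtain h where h: "Vt = U N * h" by (rule dvdE)
    obtain a H where hH: "h = qpow a * phi H" using lp_repr by blast
    have "qpow (m + int \<nu> * (int N - 1)) * phi R0 = qpow (1 - int N + a) * phi (uu N * H)"
      using h unfolding Vt_def hH U_phi by (simp add: phi_mult qpow_mult[symmetric] ac_simps)
    then have "(\<exists>s. monom 1 s * R0 = uu N * H) \<or> (\<exists>s. R0 = monom 1 s * (uu N * H))" by (rule shift_eq)
    then show False
    proof
      assume "\<exists>s. monom 1 s * R0 = uu N * H"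
      then obtain s where "monom 1 s * R0 = uu N * H" by blast
      then have "poly (cm (monom 1 s * R0)) \<omega> = poly (cm (uu N * H)) \<omega>" by simp
      moreover have wR: "\<omega> \<in> R" unfolding R_def using w2 w3 by auto
      ultimately have "\<omega> ^ s * poly (cm R0) \<omega> = 0"
        using u_root[OF wR] by (simp add: map_poly_of_int_mult map_poly_monom poly_monom)
      moreover have "\<omega> \<noteq> 0" using w3 N2 by (auto simp: power_0_left)
      ultimately show False using R0w by simp
    next
      assume "\<exists>s. R0 = monom 1 s * (uu N * H)"
      then obtain s where "R0 = monom 1 s * (uu N * H)" by blast
      then have "poly (cm R0) \<omega> = poly (cm (monom 1 s * (uu N * H))) \<omega>" by simp
      moreover have wR: "\<omega> \<in> R" unfolding R_def using w2 w3 by auto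
      ultimately have "poly (cm R0) \<omega> = 0"
        using u_root[OF wR] by (simp add: map_poly_of_int_mult map_poly_monom poly_monom)
      then show False using R0w by simp
    qed
  qed
  show ?thesis using part1 part2 rm by auto
qed

end
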